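(* Let $d\ge3$, $1\le k\le d$, $q>1$, $\alpha\ge0$, and $A=\{x\in\mathbb Z^d:x_1\ge1,\dots,x_k\ge1\}$. The problem $$-\Delta u(x)\ge|x|^{-\alpha}u(x)^q\ \ (x\in A),\qquad u=0\ \text{on }\partial A,$$ admits a solution $u$ with $u(x)>0$ for all $x\in A$ if and only if $\alpha+q(d+k-2)>d+k$.
   Context: $\mathbb Z^d$ carries unit weights on nearest-neighbour edges, so $\mu(x)=2d$ and $\Delta u(x)=\frac1{2d}\sum_{y:\|y-x\|_1=1}(u(y)-u(x))$. $\partial A=\{y\in\mathbb Z^d\setminus A:\ \|y-x\|_1=1\text{ for some }x\in A\}$. $|\cdot|$ is the Euclidean norm. *)

theory Defs
  imports Complex_Main
begin

text \<open>Points of Z^d are modelled as functions nat => int vanishing at indices >= d;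
  coordinate x_{i+1} of the paper is x i here (i < d).\<close>

definition lattice :: "nat \<Rightarrow> (nat \<Rightarrow> int) set" where
  "lattice d = {x. \<forall>i\<ge>d. x i = 0}"

definition l1dist :: "nat \<Rightarrow> (nat \<Rightarrow> int) \<Rightarrow> (nat \<Rightarrow> int) \<Rightarrow> int" where
  "l1dist d x y = (\<Sum>i<d. \<bar>x i - y i\<bar>)"

definition enorm :: "nat \<Rightarrow> (nat \<Rightarrow> int) \<Rightarrow> real" where
  "enorm d x = sqrt (\<Sum>i<d. (real_of_int (x i))\<^sup>2)"

definition lap :: "nat \<Rightarrow> ((nat \<Rightarrow> int) \<Rightarrow> real) \<Rightarrow> (nat \<Rightarrow> int) \<Rightarrow> real" where
  "lap d u x = (1 / (2 * real d)) *
     (\<Sum>y\<in>{y\<in>lattice d. l1dist d x y = 1}. (u y - u x))"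

definition boundary :: "nat \<Rightarrow> (nat \<Rightarrow> int) set \<Rightarrow> (nat \<Rightarrow> int) set" where
  "boundary d A = {y \<in> lattice d - A. \<exists>x\<in>A. l1dist d x y = 1}"

definition orthant :: "nat \<Rightarrow> nat \<Rightarrow> (nat \<Rightarrow> int) set" where
  "orthant d k = {x \<in> lattice d. \<forall>i<k. x i \<ge> 1}"

end

theory Submission
  imports Defs "HOL-Library.FuncSet"
begin

definition sh :: "(nat \<Rightarrow> int) \<Rightarrow> nat \<Rightarrow> int \<Rightarrow> (nat \<Rightarrow> int)" where
  "sh x i c = x(i := x i + c)"

lemma sh_same[simp]: "sh x i c i = x i + c" by (simp add: sh_def)
lemma sh_other[simp]: "j \<noteq> i \<Longrightarrow> sh x i c j = x j" by (simp add: sh_def)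

lemma sum_int_one:
  fixes f :: "nat \<Rightarrow> int"
  assumes "finite S" "\<forall>j\<in>S. f j \<ge> 0" "sum f S = 1"
  shows "\<exists>i\<in>S. f i = 1 \<and> (\<forall>j\<in>S. j \<noteq> i \<longrightarrow> f j = 0)"
proof -
  have "\<exists>i\<in>S. f i \<noteq> 0"
  proof (rule ccontr)
    assume "\<not> ?thesis" then have "sum f S = 0" by simp
    with assms show False by simp
  qed
  then obtain i where i: "i \<in> S" "f i \<noteq> 0" by blast
  have eq: "sum f S = f i + sum f (S - {i})" using assms(1) i(1) by (simp add: sum.remove)
  have nn: "sum f (S - {i}) \<ge> 0" using assms(2) by (intro sum_nonneg) auto
  have fi: "f i = 1" using eq nn assms i by auto
  then have z: "sum f (S - {i}) = 0" using eq assms by simp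
  have "\<forall>j\<in>S - {i}. f j = 0"
    using sum_nonneg_eq_0_iff[of "S - {i}" f] assms z by auto
  then show ?thesis using i fi by auto
qed

lemma nbr_set:
  assumes x: "x \<in> lattice d"
  shows "{y\<in>lattice d. l1dist d x y = 1} = (\<lambda>(i,c). sh x i c) ` ({..<d} \<times> {1,-1})"
proof (intro set_eqI iffI)
  fix y assume y: "y \<in> {y\<in>lattice d. l1dist d x y = 1}"
  then have "sum (\<lambda>j. \<bar>x j - y j\<bar>) {..<d} = 1" by (simp add: l1dist_def)
  from sum_int_one[OF _ _ this] obtain i where i: "i < d" "\<bar>x i - y i\<bar> = 1"
     "\<forall>j<d. j \<noteq> i \<longrightarrow> x j = y j" by auto
  have "y = sh x i (y i - x i)"
  proof
    fix j show "y j = sh x i (y i - x i) j"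
    proof (cases "j < d")
      case True then show ?thesis using i by (auto simp: sh_def)
    next
      case False then show ?thesis using x y i by (auto simp: sh_def lattice_def)
    qed
  qed
  moreover have "y i - x i \<in> {1,-1}" using i by auto
  ultimately show "y \<in> (\<lambda>(i,c). sh x i c) ` ({..<d} \<times> {1,-1})" using i by force
next
  fix y assume "y \<in> (\<lambda>(i,c). sh x i c) ` ({..<d} \<times> {1,-1})"
  then obtain i c where ic: "i < d" "c \<in> {1,-1}" "y = sh x i c" by auto
  have "y \<in> lattice d" using x ic by (auto simp: lattice_def sh_def)
  moreover have "l1dist d x y = 1"
  proof -
    have "l1dist d x y = (\<Sum>j<d. if j = i then 1 else 0)"
      unfolding l1dist_def using ic by (intro sum.cong) (auto simp: sh_def)
    also have "\<dots> = 1" using ic by simp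
    finally show ?thesis .
  qed
  ultimately show "y \<in> {y\<in>lattice d. l1dist d x y = 1}" by simp
qed

lemma sh_inj: "inj_on (\<lambda>(i,c). sh x i c) ({..<d} \<times> {1,-1})"
proof (rule inj_onI, clarify)
  fix i c i' c' assume as: "sh x i c = sh x i' c'" "c \<in> {1,-1::int}" "c' \<in> {1,-1::int}"
  show "i = i' \<and> c = c'"
  proof (cases "i = i'")
    case True then show ?thesis using fun_cong[OF as(1), of i] by (simp add: sh_def)
  next
    case False then have "sh x i c i = x i" using fun_cong[OF as(1), of i] by (simp add: sh_def)
    then show ?thesis using as by (auto simp: sh_def)
  qed
qed

lemma nbr_sum:
  fixes g :: "(nat \<Rightarrow> int) \<Rightarrow> real"
  assumes x: "x \<in> lattice d"
  shows "(\<Sum>y\<in>{y\<in>lattice d. l1dist d x y = 1}. g y) = (\<Sum>i<d. g (sh x i 1) + g (sh x i (-1)))"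
proof -
  have "(\<Sum>y\<in>{y\<in>lattice d. l1dist d x y = 1}. g y) = (\<Sum>p\<in>{..<d} \<times> {1,-1}. g ((\<lambda>(i,c). sh x i c) p))"
    unfolding nbr_set[OF x] by (rule sum.reindex[OF sh_inj, unfolded comp_def])
  also have "\<dots> = (\<Sum>(i,c)\<in>{..<d} \<times> {1,-1}. g (sh x i c))"
    by (intro sum.cong) auto
  also have "\<dots> = (\<Sum>i<d. \<Sum>c\<in>{1,-1}. g (sh x i c))" by (rule sum.cartesian_product[symmetric])
  also have "\<dots> = (\<Sum>i<d. g (sh x i 1) + g (sh x i (-1)))" by simp
  finally show ?thesis .
qed

lemma lap_eq:
  assumes x: "x \<in> lattice d"
  shows "lap d u x = (1 / (2 * real d)) * (\<Sum>i<d. u (sh x i 1) + u (sh x i (-1)) - 2 * u x)"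
  unfolding lap_def nbr_sum[OF x] by (simp add: algebra_simps)

definition hh :: "nat \<Rightarrow> (nat \<Rightarrow> int) \<Rightarrow> real" where
  "hh k x = (\<Prod>i<k. real_of_int (x i))"

definition ss :: "nat \<Rightarrow> (nat \<Rightarrow> int) \<Rightarrow> real" where
  "ss d x = (\<Sum>i<d. (real_of_int (x i))\<^sup>2)"

lemma hh_split1:
  assumes "i < k"
  shows "hh k x = x i * (\<Prod>j\<in>{..<k}-{i}. real_of_int (x j))"
  unfolding hh_def using assms by (simp add: prod.remove)

lemma hh_split2:
  assumes "i < k"
  shows "hh k (sh x i c) = (real_of_int (x i) + real_of_int c) * (\<Prod>j\<in>{..<k}-{i}. real_of_int (x j))"
proof -
  have "hh k (sh x i c) = (sh x i c i) * (\<Prod>j\<in>{..<k}-{i}. real_of_int (sh x i c j))"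
    unfolding hh_def using assms by (simp add: prod.remove)
  also have "(\<Prod>j\<in>{..<k}-{i}. real_of_int (sh x i c j)) = (\<Prod>j\<in>{..<k}-{i}. real_of_int (x j))"
    by (intro prod.cong) auto
  finally show ?thesis by simp
qed

lemma hh_sh_ge: "k \<le> i \<Longrightarrow> hh k (sh x i c) = hh k x"
  unfolding hh_def by (intro prod.cong) auto

lemma ss_sh: "i < d \<Longrightarrow> ss d (sh x i c) = ss d x + 2 * c * x i + c\<^sup>2"
proof -
  assume i: "i < d"
  have "ss d (sh x i c) = (sh x i c i)\<^sup>2 + (\<Sum>j\<in>{..<d}-{i}. (real_of_int (sh x i c j))\<^sup>2)"
    unfolding ss_def using i by (simp add: sum.remove)
  also have "(\<Sum>j\<in>{..<d}-{i}. (real_of_int (sh x i c j))\<^sup>2) = (\<Sum>j\<in>{..<d}-{i}. (real_of_int (x j))\<^sup>2)"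
    by (intro sum.cong) auto
  also have "ss d x = (x i)\<^sup>2 + (\<Sum>j\<in>{..<d}-{i}. (real_of_int (x j))\<^sup>2)"
    unfolding ss_def using i by (simp add: sum.remove)
  ultimately show ?thesis by (simp add: power2_eq_square algebra_simps)
qed

lemma sum_if_lt:
  fixes a b :: real and k d :: nat
  assumes "k \<le> d"
  shows "(\<Sum>i<d. if i < k then a else b) = k * a + (d - k) * b"
proof -
  have u: "{..<d} = {..<k} \<union> {k..<d}" using assms by auto
  have "(\<Sum>i<d. if i < k then a else b) = (\<Sum>i<k. if i < k then a else b) + (\<Sum>i\<in>{k..<d}. if i < k then a else b)"
    unfolding u by (subst sum.union_disjoint) auto
  also have "(\<Sum>i<k. if i < k then a else b) = (\<Sum>i<k. a)" by (intro sum.cong) auto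
  also have "(\<Sum>i\<in>{k..<d}. if i < k then a else b) = (\<Sum>i\<in>{k..<d}. b)" by (intro sum.cong) auto
  finally show ?thesis using assms by (simp add: of_nat_diff)
qed

lemma pair_id:
  fixes x :: "nat \<Rightarrow> int" and i k :: nat
  defines "p \<equiv> hh k (sh x i 1)" and "m \<equiv> hh k (sh x i (-1))" and "a \<equiv> real_of_int (x i)"
  shows "p + m = 2 * hh k x"
    and "p * (2*a+1) + m * (1 - 2*a) = (if i < k then 6 else 2) * hh k x"
    and "p * (2*a+1)\<^sup>2 + m * (1 - 2*a)\<^sup>2 = hh k x * (8 * a\<^sup>2 + (if i < k then 10 else 2))"
proof -
  have "(p + m = 2 * hh k x) \<and> (p * (2*a+1) + m * (1 - 2*a) = (if i < k then 6 else 2) * hh k x)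
    \<and> (p * (2*a+1)\<^sup>2 + m * (1 - 2*a)\<^sup>2 = hh k x * (8 * a\<^sup>2 + (if i < k then 10 else 2)))"
  proof (cases "i < k")
    case True
    define P where "P = (\<Prod>j\<in>{..<k}-{i}. real_of_int (x j))"
    have e1: "hh k x = a * P" and e2: "p = (a + 1) * P" and e3: "m = (a - 1) * P"
      using hh_split1[OF True, of x] hh_split2[OF True, of x] unfolding p_def m_def a_def P_def by auto
    show ?thesis unfolding e1 e2 e3 using True by (simp add: power2_eq_square algebra_simps)
  next
    case False
    then have "p = hh k x" "m = hh k x" unfolding p_def m_def by (auto simp: hh_sh_ge)
    then show ?thesis using False by (simp add: power2_eq_square algebra_simps)
  qed
  then show "p + m = 2 * hh k x"
    and "p * (2*a+1) + m * (1 - 2*a) = (if i < k then 6 else 2) * hh k x"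
    and "p * (2*a+1)\<^sup>2 + m * (1 - 2*a)\<^sup>2 = hh k x * (8 * a\<^sup>2 + (if i < k then 10 else 2))"
    by auto
qed

lemma H0: "(\<Sum>i<d. hh k (sh x i 1) + hh k (sh x i (-1))) = 2 * d * hh k x"
  by (simp add: pair_id(1))

lemma H1:
  assumes "k \<le> d"
  shows "(\<Sum>i<d. hh k (sh x i 1) * (2 * real_of_int (x i) + 1) + hh k (sh x i (-1)) * (1 - 2 * real_of_int (x i))) = (2*real d + 4*real k) * hh k x"
proof -
  have "(\<Sum>i<d. hh k (sh x i 1) * (2 * real_of_int (x i) + 1) + hh k (sh x i (-1)) * (1 - 2 * real_of_int (x i)))
     = (\<Sum>i<d. (if i < k then 6 else 2) * hh k x)" by (intro sum.cong refl pair_id(2))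
  also have "\<dots> = (\<Sum>i<d. (if i < k then 6 else 2)) * hh k x" by (simp add: sum_distrib_right)
  also have "\<dots> = (2*real d + 4*real k) * hh k x" using sum_if_lt[OF assms, of 6 2] assms
    by (simp add: of_nat_diff algebra_simps)
  finally show ?thesis .
qed

lemma H2:
  assumes "k \<le> d"
  shows "(\<Sum>i<d. hh k (sh x i 1) * (2 * real_of_int (x i) + 1)\<^sup>2 + hh k (sh x i (-1)) * (1 - 2 * real_of_int (x i))\<^sup>2)
     = hh k x * (8 * ss d x + 2*real d + 8*real k)"
proof -
  have "(\<Sum>i<d. hh k (sh x i 1) * (2 * real_of_int (x i) + 1)\<^sup>2 + hh k (sh x i (-1)) * (1 - 2 * real_of_int (x i))\<^sup>2)
     = (\<Sum>i<d. hh k x * (8 * (real_of_int (x i))\<^sup>2 + (if i < k then 10 else 2)))"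
    by (intro sum.cong refl pair_id(3))
  also have "\<dots> = hh k x * (\<Sum>i<d. 8 * (real_of_int (x i))\<^sup>2 + (if i < k then 10 else 2))"
    by (simp add: sum_distrib_left)
  also have "\<dots> = hh k x * (8 * ss d x + (\<Sum>i<d. (if i < k then 10 else 2)))"
    by (simp add: sum.distrib ss_def sum_distrib_left)
  also have "\<dots> = hh k x * (8 * ss d x + 2*real d + 8*real k)" using sum_if_lt[OF assms, of 10 2] assms
    by (simp add: of_nat_diff algebra_simps)
  finally show ?thesis .
qed

lemma orth_lattice: "x \<in> orthant d k \<Longrightarrow> x \<in> lattice d" by (simp add: orthant_def)

lemma hh_pos: "x \<in> orthant d k \<Longrightarrow> hh k x > 0"
  unfolding hh_def orthant_def by (auto intro!: prod_pos)

lemma sh_lattice: "x \<in> lattice d \<Longrightarrow> i < d \<Longrightarrow> sh x i c \<in> lattice d"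
  by (auto simp: lattice_def sh_def)

lemma sh_sh[simp]: "sh (sh x i c) i (-c) = x" "sh (sh x i (-c)) i c = x"
  by (auto simp: sh_def)

lemma sh_out:
  assumes x: "x \<in> orthant d k" and i: "i < d" and n: "sh x i c \<notin> orthant d k" and c: "c \<in> {1,-1}"
  shows "hh k (sh x i c) = 0" "sh x i c \<in> boundary d (orthant d k)"
proof -
  have lat: "sh x i c \<in> lattice d" using sh_lattice[OF orth_lattice[OF x] i] .
  then obtain j where j: "j < k" "sh x i c j < 1" using n by (auto simp: orthant_def not_le)
  have ji: "j = i"
  proof (rule ccontr)
    assume "j \<noteq> i" then have "sh x i c j = x j" by simp
    with j x show False by (auto simp: orthant_def)
  qed
  have "x i \<ge> 1" using x j ji by (auto simp: orthant_def)
  then have xc: "x i + c = 0" using j ji c by auto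
  show "hh k (sh x i c) = 0" using hh_split2[of i k x c] j ji xc
    by (metis add.commute mult_eq_0_iff of_int_0 of_int_add)
  have "sh x i c \<in> {y\<in>lattice d. l1dist d x y = 1}"
    unfolding nbr_set[OF orth_lattice[OF x]] using i c by force
  then show "sh x i c \<in> boundary d (orthant d k)"
    unfolding boundary_def using n x by auto
qed

lemma hh_nb_nonneg:
  assumes "x \<in> orthant d k" "i < d" "c \<in> {1,-1}"
  shows "hh k (sh x i c) \<ge> 0"
proof (cases "sh x i c \<in> orthant d k")
  case True then show ?thesis using hh_pos[of "sh x i c" d k] by simp
next
  case False then show ?thesis using sh_out[OF assms(1,2) False assms(3)] by simp
qed

lemma tangent_pow:
  fixes a t :: real
  assumes "a \<ge> 0" "t \<ge> 0" "m \<ge> 1"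
  shows "t ^ m \<ge> a ^ m + m * a ^ (m - 1) * (t - a)"
proof -
  have eq: "t ^ m - a ^ m = (t - a) * (\<Sum>i<m. a ^ (m - Suc i) * t ^ i)"
    by (rule power_diff_sumr2)
  show ?thesis
  proof (cases "t \<ge> a")
    case True
    have "(\<Sum>i<m. a ^ (m - Suc i) * t ^ i) \<ge> (\<Sum>i<m. a ^ (m - 1))"
    proof (intro sum_mono)
      fix i assume i: "i \<in> {..<m}"
      have "a ^ (m - 1) = a ^ (m - Suc i) * a ^ i" using i by (simp add: power_add[symmetric])
      also have "\<dots> \<le> a ^ (m - Suc i) * t ^ i"
        using True assms by (intro mult_left_mono power_mono) auto
      finally show "a ^ (m - 1) \<le> a ^ (m - Suc i) * t ^ i" .
    qed
    then have "(t - a) * (\<Sum>i<m. a ^ (m - Suc i) * t ^ i) \<ge> (t - a) * (m * a ^ (m - 1))"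
      using True by (intro mult_left_mono) auto
    then show ?thesis using eq by (simp add: algebra_simps)
  next
    case False
    have "(\<Sum>i<m. a ^ (m - Suc i) * t ^ i) \<le> (\<Sum>i<m. a ^ (m - 1))"
    proof (intro sum_mono)
      fix i assume i: "i \<in> {..<m}"
      have "a ^ (m - Suc i) * t ^ i \<le> a ^ (m - Suc i) * a ^ i"
        using False assms by (intro mult_left_mono power_mono) auto
      also have "\<dots> = a ^ (m - 1)" using i by (simp add: power_add[symmetric])
      finally show "a ^ (m - Suc i) * t ^ i \<le> a ^ (m - 1)" .
    qed
    then have "(t - a) * (\<Sum>i<m. a ^ (m - Suc i) * t ^ i) \<ge> (t - a) * (m * a ^ (m - 1))"
      using False by (intro mult_left_mono_neg) auto
    then show ?thesis using eq by (simp add: algebra_simps)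
  qed
qed

lemma green_pair:
  fixes U P :: "(nat \<Rightarrow> int) \<Rightarrow> real"
  assumes B: "finite B" and Z: "{x. P x \<noteq> 0} \<subseteq> B" and Zs: "\<And>z. P z \<noteq> 0 \<Longrightarrow> sh z i c \<in> B"
  shows "(\<Sum>x\<in>B. P x * U (sh x i c)) = (\<Sum>x\<in>B. U x * P (sh x i (-c)))"
proof -
  let ?Z = "{x. P x \<noteq> 0}"
  have fZ: "finite ?Z" using B Z finite_subset by blast
  have "(\<Sum>x\<in>B. P x * U (sh x i c)) = (\<Sum>x\<in>?Z. P x * U (sh x i c))"
    using B Z by (intro sum.mono_neutral_right) auto
  also have "\<dots> = (\<Sum>x\<in>(\<lambda>z. sh z i c) ` ?Z. U x * P (sh x i (-c)))"
  proof (subst sum.reindex)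
    show "inj_on (\<lambda>z. sh z i c) ?Z" by (rule inj_onI) (metis sh_sh(1))
  qed (simp add: mult.commute)
  also have "\<dots> = (\<Sum>x\<in>B. U x * P (sh x i (-c)))"
  proof (intro sum.mono_neutral_left B)
    show "(\<lambda>z. sh z i c) ` ?Z \<subseteq> B" using Zs by auto
    show "\<forall>x\<in>B - (\<lambda>z. sh z i c) ` ?Z. U x * P (sh x i (- c)) = 0"
    proof
      fix x assume "x \<in> B - (\<lambda>z. sh z i c) ` ?Z"
      then have "sh x i (-c) \<notin> ?Z" by (metis DiffD2 image_eqI sh_sh(2))
      then show "U x * P (sh x i (- c)) = 0" by simp
    qed
  qed
  finally show ?thesis .
qed

lemma green:
  fixes U P :: "(nat \<Rightarrow> int) \<Rightarrow> real"
  assumes B: "finite B" "B \<subseteq> lattice d" and Z: "{x. P x \<noteq> 0} \<subseteq> B"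
    and Zs: "\<And>z i c. P z \<noteq> 0 \<Longrightarrow> i < d \<Longrightarrow> c \<in> {1,-1} \<Longrightarrow> sh z i c \<in> B"
  shows "(\<Sum>x\<in>B. P x * lap d U x) = (\<Sum>x\<in>B. U x * lap d P x)"
proof -
  have "(\<Sum>x\<in>B. P x * lap d U x) = (1 / (2 * real d)) * (\<Sum>x\<in>B. \<Sum>i<d. P x * U (sh x i 1) + P x * U (sh x i (-1)) - 2 * P x * U x)"
    using B by (simp add: lap_eq subset_iff sum_distrib_left sum_distrib_right algebra_simps)
  also have "(\<Sum>x\<in>B. \<Sum>i<d. P x * U (sh x i 1) + P x * U (sh x i (-1)) - 2 * P x * U x)
     = (\<Sum>i<d. (\<Sum>x\<in>B. P x * U (sh x i 1)) + (\<Sum>x\<in>B. P x * U (sh x i (-1))) - (\<Sum>x\<in>B. 2 * P x * U x))"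
    by (subst sum.swap) (simp add: sum.distrib sum_subtractf)
  also have "\<dots> = (\<Sum>i<d. (\<Sum>x\<in>B. U x * P (sh x i (-1))) + (\<Sum>x\<in>B. U x * P (sh x i 1)) - (\<Sum>x\<in>B. 2 * U x * P x))"
  proof (intro sum.cong refl)
    fix i assume i: "i \<in> {..<d}"
    have e1: "(\<Sum>x\<in>B. P x * U (sh x i 1)) = (\<Sum>x\<in>B. U x * P (sh x i (-1)))"
      using green_pair[OF B(1) Z, of i 1 U] Zs i by auto
    have e2: "(\<Sum>x\<in>B. P x * U (sh x i (-1))) = (\<Sum>x\<in>B. U x * P (sh x i 1))"
      using green_pair[OF B(1) Z, of i "-1" U] Zs i by auto
    show "(\<Sum>x\<in>B. P x * U (sh x i 1)) + (\<Sum>x\<in>B. P x * U (sh x i (-1))) - (\<Sum>x\<in>B. 2 * P x * U x)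
      = (\<Sum>x\<in>B. U x * P (sh x i (-1))) + (\<Sum>x\<in>B. U x * P (sh x i 1)) - (\<Sum>x\<in>B. 2 * U x * P x)"
      using e1 e2 by (simp add: mult.commute mult.left_commute)
  qed
  also have "\<dots> = (\<Sum>x\<in>B. \<Sum>i<d. U x * P (sh x i 1) + U x * P (sh x i (-1)) - 2 * U x * P x)"
    by (subst sum.swap) (simp add: sum.distrib sum_subtractf)
  also have "(1 / (2 * real d)) * \<dots> = (\<Sum>x\<in>B. U x * lap d P x)"
    using B by (simp add: lap_eq subset_iff sum_distrib_left sum_distrib_right algebra_simps)
  finally show ?thesis .
qed

definition th :: "nat \<Rightarrow> real \<Rightarrow> (nat \<Rightarrow> int) \<Rightarrow> real" where
  "th d R x = max 0 (1 - ss d x / R\<^sup>2)"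

definition Phi :: "nat \<Rightarrow> nat \<Rightarrow> real \<Rightarrow> nat \<Rightarrow> (nat \<Rightarrow> int) \<Rightarrow> real" where
  "Phi d k R m x = (if x \<in> orthant d k then hh k x * th d R x ^ m else 0)"

lemma th_nonneg: "th d R x \<ge> 0" by (simp add: th_def)

lemma Phi_nb:
  assumes "x \<in> orthant d k" "i < d" "c \<in> {1,-1}"
  shows "Phi d k R m (sh x i c) = hh k (sh x i c) * th d R (sh x i c) ^ m"
  using sh_out[OF assms(1,2) _ assms(3)] by (auto simp: Phi_def)

lemma lap_Phi:
  assumes x: "x \<in> orthant d k" and R: "R > 0" and m: "m \<ge> 1" and kd: "k \<le> d" and d: "d > 0"
  shows "- lap d (Phi d k R m) x \<le> m * th d R x ^ (m - 1) * hh k x * (2 * real d + 4 * real k) / (2 * real d * R\<^sup>2)"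
proof -
  define a where "a = th d R x"
  define h where "h = hh k x"
  define F where "F = (\<lambda>y. 1 - ss d y / R\<^sup>2)"
  let ?hp = "\<lambda>i. hh k (sh x i 1)" and ?hm = "\<lambda>i. hh k (sh x i (-1))"
  let ?tp = "\<lambda>i. th d R (sh x i 1)" and ?tm = "\<lambda>i. th d R (sh x i (-1))"
  have a0: "a \<ge> 0" unfolding a_def by (rule th_nonneg)
  have hp0: "\<And>i. i < d \<Longrightarrow> ?hp i \<ge> 0" using hh_nb_nonneg[OF x] by auto
  have hm0: "\<And>i. i < d \<Longrightarrow> ?hm i \<ge> 0" using hh_nb_nonneg[OF x] by auto
  have lat: "x \<in> lattice d" using x by (rule orth_lattice)
  have Phix: "Phi d k R m x = h * a ^ m" using x by (simp add: Phi_def h_def a_def)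
  have lapeq: "lap d (Phi d k R m) x = (1 / (2 * real d)) * ((\<Sum>i<d. ?hp i * ?tp i ^ m + ?hm i * ?tm i ^ m) - 2 * real d * (h * a ^ m))"
    unfolding lap_eq[OF lat] Phix
    by (simp add: Phi_nb[OF x] sum_subtractf algebra_simps)
  have S0: "(\<Sum>i<d. ?hp i + ?hm i) = 2 * real d * h" unfolding h_def by (rule H0)
  have S1F: "(\<Sum>i<d. ?hp i * F (sh x i 1) + ?hm i * F (sh x i (-1))) = 2 * real d * h * F x - (2 * real d + 4 * real k) * h / R\<^sup>2"
  proof -
    have "(\<Sum>i<d. ?hp i * F (sh x i 1) + ?hm i * F (sh x i (-1)))
       = (\<Sum>i<d. F x * (?hp i + ?hm i) - (?hp i * (2 * real_of_int (x i) + 1) + ?hm i * (1 - 2 * real_of_int (x i))) / R\<^sup>2)"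
      using R by (intro sum.cong refl) (simp add: F_def ss_sh field_simps)
    also have "\<dots> = F x * (\<Sum>i<d. ?hp i + ?hm i) - (\<Sum>i<d. ?hp i * (2 * real_of_int (x i) + 1) + ?hm i * (1 - 2 * real_of_int (x i))) / R\<^sup>2"
      by (simp add: sum_subtractf sum_distrib_left sum_divide_distrib)
    also have "\<dots> = 2 * real d * h * F x - (2 * real d + 4 * real k) * h / R\<^sup>2"
      unfolding S0 H1[OF kd] h_def by simp
    finally show ?thesis .
  qed
  have S1: "(\<Sum>i<d. ?hp i * ?tp i + ?hm i * ?tm i) - 2 * real d * h * a \<ge> - ((2 * real d + 4 * real k) * h / R\<^sup>2)"
  proof (cases "F x \<ge> 0")
    case True
    then have aF: "a = F x" by (simp add: a_def th_def F_def)
    have "(\<Sum>i<d. ?hp i * F (sh x i 1) + ?hm i * F (sh x i (-1))) \<le> (\<Sum>i<d. ?hp i * ?tp i + ?hm i * ?tm i)"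
      using hp0 hm0 by (intro sum_mono add_mono mult_left_mono) (auto simp: th_def F_def)
    then show ?thesis using S1F aF by simp
  next
    case False
    then have a00: "a = 0" by (simp add: a_def th_def F_def)
    have "0 \<le> (\<Sum>i<d. ?hp i * ?tp i + ?hm i * ?tm i)"
      using hp0 hm0 by (intro sum_nonneg add_nonneg_nonneg mult_nonneg_nonneg th_nonneg) auto
    moreover have "(2 * real d + 4 * real k) * h / R\<^sup>2 \<ge> 0"
      using hh_pos[OF x] by (simp add: h_def)
    ultimately show ?thesis using a00 by simp
  qed
  have T: "(\<Sum>i<d. ?hp i * ?tp i ^ m + ?hm i * ?tm i ^ m)
      \<ge> (\<Sum>i<d. ?hp i * (a ^ m + m * a ^ (m - 1) * (?tp i - a)) + ?hm i * (a ^ m + m * a ^ (m - 1) * (?tm i - a)))"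
    using hp0 hm0 by (intro sum_mono add_mono mult_left_mono tangent_pow a0 th_nonneg m) auto
  have T2: "(\<Sum>i<d. ?hp i * (a ^ m + m * a ^ (m - 1) * (?tp i - a)) + ?hm i * (a ^ m + m * a ^ (m - 1) * (?tm i - a)))
      = a ^ m * (\<Sum>i<d. ?hp i + ?hm i) + m * a ^ (m - 1) * ((\<Sum>i<d. ?hp i * ?tp i + ?hm i * ?tm i) - a * (\<Sum>i<d. ?hp i + ?hm i))"
    by (simp add: sum.distrib sum_subtractf sum_distrib_left algebra_simps)
  have m1: "(\<Sum>i<d. ?hp i * ?tp i ^ m + ?hm i * ?tm i ^ m) - 2 * real d * (h * a ^ m)
      \<ge> m * a ^ (m - 1) * ((\<Sum>i<d. ?hp i * ?tp i + ?hm i * ?tm i) - 2 * real d * h * a)"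
    using T unfolding T2 S0 by (simp add: algebra_simps)
  have m2: "m * a ^ (m - 1) * ((\<Sum>i<d. ?hp i * ?tp i + ?hm i * ?tm i) - 2 * real d * h * a)
      \<ge> m * a ^ (m - 1) * (- ((2 * real d + 4 * real k) * h / R\<^sup>2))"
    using S1 a0 by (intro mult_left_mono) auto
  have main: "(\<Sum>i<d. ?hp i * ?tp i ^ m + ?hm i * ?tm i ^ m) - 2 * real d * (h * a ^ m)
      \<ge> - (m * a ^ (m - 1) * ((2 * real d + 4 * real k) * h / R\<^sup>2))" using m1 m2 by simp
  have "- lap d (Phi d k R m) x = - ((\<Sum>i<d. ?hp i * ?tp i ^ m + ?hm i * ?tm i ^ m) - 2 * real d * (h * a ^ m)) / (2 * real d)"
    unfolding lapeq by (simp add: minus_divide_left)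
  also have "\<dots> \<le> (m * a ^ (m - 1) * ((2 * real d + 4 * real k) * h / R\<^sup>2)) / (2 * real d)"
    using main d by (intro divide_right_mono) auto
  also have "\<dots> = m * th d R x ^ (m - 1) * hh k x * (2 * real d + 4 * real k) / (2 * real d * R\<^sup>2)"
    by (simp add: a_def h_def field_simps)
  finally show ?thesis .
qed

definition box :: "nat \<Rightarrow> int \<Rightarrow> (nat \<Rightarrow> int) set" where
  "box d M = {x\<in>lattice d. \<forall>i<d. \<bar>x i\<bar> \<le> M}"

definition ballA :: "nat \<Rightarrow> nat \<Rightarrow> real \<Rightarrow> (nat \<Rightarrow> int) set" where
  "ballA d k R = {x\<in>orthant d k. ss d x < R\<^sup>2}"

lemma box_fin_card: "finite (box d M) \<and> card (box d M) \<le> nat (2 * M + 1) ^ d"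
proof -
  let ?f = "\<lambda>x::nat\<Rightarrow>int. restrict x {..<d}"
  have inj: "inj_on ?f (box d M)"
  proof (rule inj_onI)
    fix x y assume xy: "x \<in> box d M" "y \<in> box d M" "?f x = ?f y"
    show "x = y"
    proof
      fix i show "x i = y i"
      proof (cases "i < d")
        case True then show ?thesis using fun_cong[OF xy(3), of i] by simp
      next
        case False then show ?thesis using xy by (auto simp: box_def lattice_def)
      qed
    qed
  qed
  have sub: "?f ` box d M \<subseteq> PiE {..<d} (\<lambda>_. {-M..M})"
    by (auto simp: box_def abs_le_iff split: if_splits)
  have fin: "finite (PiE {..<d} (\<lambda>_. {-M..M}))" by (intro finite_PiE) auto
  have "finite (box d M)" using finite_imageD[OF finite_subset[OF sub fin] inj] .
  moreover have "card (box d M) \<le> card (PiE {..<d} (\<lambda>_. {-M..M}))"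
    by (rule card_inj_on_le[OF inj sub fin])
  moreover have "card (PiE {..<d} (\<lambda>_. {-M..M})) = nat (2 * M + 1) ^ d"
    by (simp add: card_PiE)
  ultimately show ?thesis by simp
qed

lemma sq_le_ss: "i < d \<Longrightarrow> (real_of_int (x i))\<^sup>2 \<le> ss d x"
  unfolding ss_def by (rule member_le_sum[of i "{..<d}" "\<lambda>j. (real_of_int (x j))\<^sup>2"]) auto

lemma abs_le_of_ss:
  assumes "i < d" "ss d x < R\<^sup>2" "R > 0"
  shows "\<bar>real_of_int (x i)\<bar> < R"
proof -
  have "(real_of_int (x i))\<^sup>2 < R\<^sup>2" using sq_le_ss[OF assms(1), of x] assms by simp
  then have "\<bar>real_of_int (x i)\<bar>\<^sup>2 < R\<^sup>2" by simp
  from power2_less_imp_less[OF this] show ?thesis using assms(3) by simp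
qed

lemma ballA_box:
  assumes "R > 0"
  shows "ballA d k R \<subseteq> box d \<lceil>R\<rceil>"
proof
  fix x assume x: "x \<in> ballA d k R"
  have "\<forall>i<d. \<bar>x i\<bar> \<le> \<lceil>R\<rceil>"
  proof (intro allI impI)
    fix i assume "i < d"
    then have "\<bar>real_of_int (x i)\<bar> < R" using abs_le_of_ss x assms by (auto simp: ballA_def)
    then show "\<bar>x i\<bar> \<le> \<lceil>R\<rceil>" by linarith
  qed
  then show "x \<in> box d \<lceil>R\<rceil>" using x by (auto simp: box_def ballA_def orthant_def)
qed

lemma ballA_finite: "R > 0 \<Longrightarrow> finite (ballA d k R)"
  by (rule finite_subset[OF ballA_box conjunct1[OF box_fin_card]])

lemma th_zero: "R > 0 \<Longrightarrow> ss d x \<ge> R\<^sup>2 \<Longrightarrow> th d R x = 0"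
  unfolding th_def by (simp add: field_simps)

lemma star_ineq:
  fixes u :: "(nat \<Rightarrow> int) \<Rightarrow> real"
  assumes d: "d \<ge> 1" and kd: "k \<le> d"
    and sol: "\<forall>x\<in>orthant d k. u x > 0 \<and> - lap d u x \<ge> enorm d x powr (- \<alpha>) * u x powr q"
    and bd: "\<forall>y\<in>boundary d (orthant d k). u y = 0"
    and R: "R > 0" and m: "m \<ge> 2"
  shows "(\<Sum>x\<in>ballA d k R. enorm d x powr (- \<alpha>) * u x powr q * hh k x * th d R x ^ m)
     \<le> (m * (2 * real d + 4 * real k) / (2 * real d * R\<^sup>2)) * (\<Sum>x\<in>ballA d k R. u x * hh k x * th d R x ^ (m - 1))"
proof -
  let ?A = "orthant d k"
  define U where "U = (\<lambda>x. if x \<in> ?A then u x else 0)"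
  define P where "P = Phi d k R m"
  define w where "w = (\<lambda>x. enorm d x powr (- \<alpha>) * u x powr q)"
  define K where "K = m * (2 * real d + 4 * real k) / (2 * real d * R\<^sup>2)"
  have lapU: "lap d U x = lap d u x" if x: "x \<in> ?A" for x
  proof -
    have "U (sh x i c) = u (sh x i c)" if "i < d" "c \<in> {1,-1}" for i c
    proof (cases "sh x i c \<in> ?A")
      case True then show ?thesis by (simp add: U_def)
    next
      case False then show ?thesis using sh_out(2)[OF x that(1) False that(2)] bd by (simp add: U_def)
    qed
    then show ?thesis unfolding lap_eq[OF orth_lattice[OF x]] using x by (simp add: U_def)
  qed
  define B where "B = box d (\<lceil>R\<rceil> + 1)"
  have finB: "finite B" using box_fin_card by (simp add: B_def)
  have Blat: "B \<subseteq> lattice d" by (auto simp: B_def box_def)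
  have Psupp: "x \<in> ballA d k R" if "P x \<noteq> 0" for x
  proof -
    have xA: "x \<in> ?A" using that by (auto simp: P_def Phi_def split: if_splits)
    have "ss d x < R\<^sup>2"
    proof (rule ccontr)
      assume "\<not> ss d x < R\<^sup>2" then have "th d R x = 0" using th_zero R by simp
      then show False using that m by (auto simp: P_def Phi_def power_0_left split: if_splits)
    qed
    then show ?thesis using xA by (simp add: ballA_def)
  qed
  have ZB: "{x. P x \<noteq> 0} \<subseteq> B"
  proof
    fix x assume "x \<in> {x. P x \<noteq> 0}"
    then have "x \<in> box d \<lceil>R\<rceil>" using Psupp ballA_box[OF R] by auto
    then show "x \<in> B" by (auto simp: B_def box_def)
  qed
  have ZsB: "sh z i c \<in> B" if "P z \<noteq> 0" "i < d" "c \<in> {1,-1}" for z i c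
  proof -
    have z: "z \<in> box d \<lceil>R\<rceil>" using Psupp[OF that(1)] ballA_box[OF R] by auto
    have "\<bar>sh z i c j\<bar> \<le> \<lceil>R\<rceil> + 1" if "j < d" for j
      using z that \<open>c \<in> {1,-1}\<close> by (cases "j = i") (auto simp: box_def)
    moreover have "sh z i c \<in> lattice d" using z that(2) sh_lattice by (auto simp: box_def)
    ultimately show ?thesis by (simp add: B_def box_def)
  qed
  have G: "(\<Sum>x\<in>B. P x * lap d U x) = (\<Sum>x\<in>B. U x * lap d P x)"
    by (rule green[OF finB Blat ZB ZsB])
  have ballB: "ballA d k R \<subseteq> B"
  proof
    fix x assume "x \<in> ballA d k R"
    then have "x \<in> box d \<lceil>R\<rceil>" using ballA_box[OF R] by auto
    then show "x \<in> B" by (auto simp: B_def box_def)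
  qed
  have "(\<Sum>x\<in>ballA d k R. enorm d x powr (- \<alpha>) * u x powr q * hh k x * th d R x ^ m) = (\<Sum>x\<in>B. P x * w x)"
  proof (rule sum.mono_neutral_cong_left[OF finB ballB])
    show "\<forall>x\<in>B - ballA d k R. P x * w x = 0" using Psupp by auto
    show "\<And>x. x \<in> ballA d k R \<Longrightarrow> enorm d x powr - \<alpha> * u x powr q * hh k x * th d R x ^ m = P x * w x"
      by (simp add: P_def Phi_def w_def ballA_def)
  qed
  also have "\<dots> \<le> (\<Sum>x\<in>B. P x * (- lap d U x))"
  proof (rule sum_mono)
    fix x assume "x \<in> B"
    show "P x * w x \<le> P x * (- lap d U x)"
    proof (cases "x \<in> ?A")
      case True
      have "P x \<ge> 0" using True hh_pos[OF True] th_nonneg by (simp add: P_def Phi_def)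
      then show ?thesis using sol True lapU[OF True] by (intro mult_left_mono) (auto simp: w_def)
    next
      case False then show ?thesis by (simp add: P_def Phi_def)
    qed
  qed
  also have "\<dots> = (\<Sum>x\<in>B. U x * (- lap d P x))" using G by (simp add: sum_negf)
  also have "\<dots> \<le> (\<Sum>x\<in>B. if x \<in> ballA d k R then K * (u x * hh k x * th d R x ^ (m - 1)) else 0)"
  proof (rule sum_mono)
    fix x assume "x \<in> B"
    show "U x * (- lap d P x) \<le> (if x \<in> ballA d k R then K * (u x * hh k x * th d R x ^ (m - 1)) else 0)"
    proof (cases "x \<in> ?A")
      case True
      have ux: "u x > 0" using sol True by auto
      have "U x * (- lap d P x) \<le> u x * (m * th d R x ^ (m - 1) * hh k x * (2 * real d + 4 * real k) / (2 * real d * R\<^sup>2))"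
      proof -
        have "- lap d (Phi d k R m) x \<le> m * th d R x ^ (m - 1) * hh k x * (2 * real d + 4 * real k) / (2 * real d * R\<^sup>2)"
          using lap_Phi[OF True R _ kd, of m] m d by simp
        from mult_left_mono[OF this less_imp_le[OF ux]] show ?thesis unfolding P_def using True by (simp add: U_def)
      qed
      also have "\<dots> = K * (u x * hh k x * th d R x ^ (m - 1))" by (simp add: K_def field_simps)
      also have "\<dots> = (if x \<in> ballA d k R then K * (u x * hh k x * th d R x ^ (m - 1)) else 0)"
      proof (cases "ss d x < R\<^sup>2")
        case True2: True then show ?thesis using True by (simp add: ballA_def)
      next
        case False then have "th d R x = 0" using th_zero R by simp
        then show ?thesis using m by (simp add: ballA_def)
      qed
      finally show ?thesis .
    next
      case False then show ?thesis by (simp add: U_def ballA_def)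
    qed
  qed
  also have "\<dots> = (\<Sum>x\<in>ballA d k R. K * (u x * hh k x * th d R x ^ (m - 1)))"
    using finB ballB by (simp add: sum.If_cases Int_absorb1)
  also have "\<dots> = K * (\<Sum>x\<in>ballA d k R. u x * hh k x * th d R x ^ (m - 1))"
    by (simp add: sum_distrib_left)
  finally show ?thesis by (simp add: K_def)
qed

lemma young1:
  fixes u a b q :: real
  assumes u: "u \<ge> 0" and a: "a > 0" and b: "b \<ge> 0" and q: "q > 1"
  shows "u * b \<le> a * u powr q + a powr (-1/(q-1)) * b powr (q/(q-1))"
proof (cases "b = 0")
  case True then show ?thesis using a u by simp
next
  case False
  then have b0: "b > 0" using b by simp
  define p where "p = 1/(q-1)"
  have p0: "p > 0" using q by (simp add: p_def)
  have qp: "q/(q-1) = 1 + p" using q by (simp add: p_def field_simps)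
  define \<tau> where "\<tau> = (b/a) powr p"
  have tau0: "\<tau> > 0" using a b0 by (simp add: \<tau>_def)
  have key: "a powr (-1/(q-1)) * b powr (q/(q-1)) = \<tau> * b"
  proof -
    have "b powr (q/(q-1)) = b * b powr p" unfolding qp using b0 by (simp add: powr_add)
    moreover have "a powr (-1/(q-1)) = 1 / a powr p" by (simp add: p_def powr_minus_divide minus_divide_left[symmetric])
    ultimately show ?thesis by (simp add: \<tau>_def powr_divide)
  qed
  show ?thesis
  proof (cases "u \<le> \<tau>")
    case True
    have "u * b \<le> \<tau> * b" using True b by (rule mult_right_mono)
    also have "\<dots> \<le> a * u powr q + \<tau> * b" using a by simp
    finally show ?thesis using key by simp
  next
    case False
    then have ut: "u > \<tau>" by simp
    have "u powr (q - 1) > \<tau> powr (q - 1)" using powr_less_mono2[of "q-1" \<tau> u] q tau0 ut by simp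
    moreover have "\<tau> powr (q - 1) = b / a" using q a b0 by (simp add: \<tau>_def powr_powr p_def)
    ultimately have "a * u powr (q - 1) > b" using a by (simp add: field_simps)
    then have "a * u powr (q - 1) * u \<ge> b * u" using u by (intro mult_right_mono) auto
    moreover have "u powr q = u powr (q - 1) * u"
    proof -
      have "u powr q = u powr ((q - 1) + 1)" by simp
      also have "\<dots> = u powr (q - 1) * u powr 1" by (rule powr_add)
      finally show ?thesis using ut tau0 by simp
    qed
    ultimately have "u * b \<le> a * u powr q" by (simp add: algebra_simps)
    moreover have "a powr (-1/(q-1)) * b powr (q/(q-1)) \<ge> 0" by simp
    ultimately show ?thesis by linarith
  qed
qed

lemma PB:
  fixes \<rho> H T L C u \<alpha> q :: real and m :: nat
  assumes \<rho>: "\<rho> > 0" and H: "H > 0" and T0: "0 \<le> T" and T1: "T \<le> 1" and L: "L > 0" and C: "C \<ge> 0"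
    and u: "u \<ge> 0" and q: "q > 1" and m: "real m \<ge> q/(q-1)"
  shows "C * (u * H * T^(m-1)) \<le> L * (\<rho> powr (-\<alpha>) * u powr q * H * T^m)
           + L powr (-1/(q-1)) * C powr (q/(q-1)) * H * \<rho> powr (\<alpha>/(q-1))"
proof -
  define p where "p = 1/(q-1)"
  have qp: "q/(q-1) = 1 + p" using q by (simp add: p_def field_simps)
  have p0: "p > 0" using q by (simp add: p_def)
  have m2: "m \<ge> 2" using m qp p0 by simp
  have mp: "-1/(q-1) = -p" by (simp add: p_def)
  have ap: "\<alpha>/(q-1) = \<alpha> * p" by (simp add: p_def)
  have R0: "L powr (-1/(q-1)) * C powr (q/(q-1)) * H * \<rho> powr (\<alpha>/(q-1)) \<ge> 0" using H by simp
  have L0: "L * (\<rho> powr (-\<alpha>) * u powr q * H * T^m) \<ge> 0" using L H T0 by simp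
  show ?thesis
  proof (cases "T = 0 \<or> C = 0")
    case True
    have z: "C * (u * H * T^(m-1)) = 0" using True m2 by (auto simp: power_0_left)
    show ?thesis using R0 L0 z by linarith
  next
    case False
    then have T: "T > 0" and C0: "C > 0" using T0 C by auto
    define a where "a = L * \<rho> powr (-\<alpha>) * H * T^m"
    define b where "b = C * H * T^(m-1)"
    have a0: "a > 0" using L \<rho> H T by (simp add: a_def)
    have b0: "b > 0" using C0 H T by (simp add: b_def)
    have Y: "u * b \<le> a * u powr q + a powr (-1/(q-1)) * b powr (q/(q-1))"
      by (rule young1[OF u a0 less_imp_le[OF b0] q])
    have eq: "a powr (-1/(q-1)) * b powr (q/(q-1)) = L powr (-p) * C powr (1 + p) * H * \<rho> powr (\<alpha> * p) * T powr (real m - (1 + p))"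
    proof -
      have lhs0: "a powr (-1/(q-1)) * b powr (q/(q-1)) > 0" using a0 b0 by simp
      have rhs0: "L powr (-p) * C powr (1 + p) * H * \<rho> powr (\<alpha> * p) * T powr (real m - (1 + p)) > 0"
        using L C0 H \<rho> T by simp
      have la: "ln a = ln L - \<alpha> * ln \<rho> + ln H + real m * ln T"
        unfolding a_def using L \<rho> H T by (simp add: ln_mult ln_realpow)
      have lb: "ln b = ln C + ln H + (real m - 1) * ln T"
        unfolding b_def using C0 H T m2 by (simp add: ln_mult ln_realpow of_nat_diff)
      have "ln (a powr (-1/(q-1)) * b powr (q/(q-1))) = (-p) * ln a + (1 + p) * ln b"
        unfolding mp qp using a0 b0 by (simp add: ln_mult)
      also have "\<dots> = ln (L powr (-p) * C powr (1 + p) * H * \<rho> powr (\<alpha> * p) * T powr (real m - (1 + p)))"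
        unfolding la lb using L C0 H \<rho> T by (simp add: ln_mult algebra_simps)
      finally show ?thesis using lhs0 rhs0 by simp
    qed
    have Tle: "T powr (real m - (1 + p)) \<le> 1"
      using T T1 m qp by (intro powr_le1) auto
    have "a powr (-1/(q-1)) * b powr (q/(q-1)) \<le> L powr (-p) * C powr (1 + p) * H * \<rho> powr (\<alpha> * p)"
      unfolding eq using Tle H L C0 \<rho> by (intro mult_left_le) auto
    also have "\<dots> = L powr (-1/(q-1)) * C powr (q/(q-1)) * H * \<rho> powr (\<alpha>/(q-1))"
      by (simp only: qp mp ap)
    finally have second: "a powr (-1/(q-1)) * b powr (q/(q-1)) \<le> L powr (-1/(q-1)) * C powr (q/(q-1)) * H * \<rho> powr (\<alpha>/(q-1))" .
    have "C * (u * H * T^(m-1)) = u * b" by (simp add: b_def)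
    also have "a * u powr q = L * (\<rho> powr (-\<alpha>) * u powr q * H * T^m)" by (simp add: a_def)
    ultimately show ?thesis using Y second by linarith
  qed
qed

lemma enorm_ge1:
  assumes "x \<in> orthant d k" "k \<ge> 1" "k \<le> d"
  shows "enorm d x \<ge> 1"
proof -
  have "x 0 \<ge> 1" using assms by (auto simp: orthant_def)
  then have "1 \<le> (real_of_int (x 0))\<^sup>2" by (simp add: one_le_power)
  also have "\<dots> \<le> ss d x" using assms by (intro sq_le_ss) auto
  finally have "1 \<le> ss d x" .
  then show ?thesis unfolding enorm_def ss_def[symmetric] by simp
qed

lemma enorm_lt:
  assumes "x \<in> ballA d k R" "R > 0"
  shows "enorm d x < R"
proof -
  have "ss d x < R\<^sup>2" using assms by (simp add: ballA_def)
  then have "sqrt (ss d x) < sqrt (R\<^sup>2)" by (simp only: real_sqrt_less_iff)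
  then show ?thesis using assms(2) unfolding enorm_def ss_def[symmetric] by simp
qed

lemma hh_le_ball:
  assumes "x \<in> ballA d k R" "R > 0" "k \<le> d"
  shows "hh k x \<le> R ^ k"
proof -
  have "hh k x = (\<Prod>i<k. real_of_int (x i))" by (simp add: hh_def)
  also have "\<dots> \<le> (\<Prod>i<k. R)"
  proof (rule prod_mono)
    fix i assume i: "i \<in> {..<k}"
    have xi: "x i \<ge> 1" using assms i by (auto simp: ballA_def orthant_def)
    have "\<bar>real_of_int (x i)\<bar> < R" using abs_le_of_ss[of i d x R] assms i by (auto simp: ballA_def)
    then show "0 \<le> real_of_int (x i) \<and> real_of_int (x i) \<le> R" using xi by auto
  qed
  finally show ?thesis by simp
qed

lemma card_ballA:
  assumes "R \<ge> 1"
  shows "real (card (ballA d k R)) \<le> (5 * R) ^ d"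
proof -
  have "card (ballA d k R) \<le> card (box d \<lceil>R\<rceil>)"
    using assms box_fin_card ballA_box by (intro card_mono) auto
  also have "\<dots> \<le> nat (2 * \<lceil>R\<rceil> + 1) ^ d" using box_fin_card by blast
  finally have "real (card (ballA d k R)) \<le> real (nat (2 * \<lceil>R\<rceil> + 1) ^ d)" by linarith
  also have "\<dots> = (real_of_int (2 * \<lceil>R\<rceil> + 1)) ^ d" using assms by (simp add: of_nat_power)
  also have "\<dots> \<le> (5 * R) ^ d"
  proof (rule power_mono)
    show "real_of_int (2 * \<lceil>R\<rceil> + 1) \<le> 5 * R" using assms by linarith
    show "0 \<le> real_of_int (2 * \<lceil>R\<rceil> + 1)" using assms by linarith
  qed
  finally show ?thesis .
qed

lemma CB:
  assumes R: "R \<ge> 1" and kd: "k \<le> d" and \<beta>: "\<beta> \<ge> 0"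
  shows "(\<Sum>x\<in>ballA d k R. hh k x * enorm d x powr \<beta>) \<le> 5 ^ d * R powr (real d + real k + \<beta>)"
proof -
  have "(\<Sum>x\<in>ballA d k R. hh k x * enorm d x powr \<beta>) \<le> (\<Sum>x\<in>ballA d k R. R ^ k * R powr \<beta>)"
  proof (rule sum_mono)
    fix x assume x: "x \<in> ballA d k R"
    have "hh k x \<le> R ^ k" using hh_le_ball[OF x _ kd] R by simp
    moreover have "enorm d x powr \<beta> \<le> R powr \<beta>"
      using enorm_lt[OF x] R \<beta> by (intro powr_mono2) (auto simp: enorm_def intro: sum_nonneg)
    moreover have "hh k x \<ge> 0" using x hh_pos by (auto simp: ballA_def intro: less_imp_le)
    ultimately show "hh k x * enorm d x powr \<beta> \<le> R ^ k * R powr \<beta>"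
      by (intro mult_mono) auto
  qed
  also have "\<dots> = real (card (ballA d k R)) * (R ^ k * R powr \<beta>)" by simp
  also have "\<dots> \<le> (5 * R) ^ d * (R ^ k * R powr \<beta>)"
    using card_ballA[OF R] R by (intro mult_right_mono) auto
  also have "\<dots> = 5 ^ d * R powr (real d + real k + \<beta>)"
    using R by (simp add: powr_add powr_realpow power_mult_distrib)
  finally show ?thesis .
qed

lemma GL:
  fixes u :: "(nat \<Rightarrow> int) \<Rightarrow> real" and m :: nat
  assumes upos: "\<forall>x\<in>orthant d k. u x > 0" and q: "q > 1" and m: "real m \<ge> q/(q-1)"
    and k1: "k \<ge> 1" and kd: "k \<le> d"
    and R: "R \<ge> 1" and S: "S \<subseteq> ballA d k R" and L: "L > 0" and K0: "K0 \<ge> 0"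
  shows "(K0 / R\<^sup>2) * (\<Sum>x\<in>S. u x * hh k x * th d R x ^ (m - 1))
     \<le> L * (\<Sum>x\<in>S. enorm d x powr (-\<alpha>) * u x powr q * hh k x * th d R x ^ m)
       + L powr (-1/(q-1)) * K0 powr (q/(q-1)) * R powr (-2*(q/(q-1))) * (\<Sum>x\<in>S. hh k x * enorm d x powr (\<alpha>/(q-1)))"
proof -
  have Cpow: "(K0 / R\<^sup>2) powr (q/(q-1)) = K0 powr (q/(q-1)) * R powr (-2*(q/(q-1)))"
  proof -
    have R2: "R\<^sup>2 = R powr 2" using R by (simp add: powr_realpow)
    have "(R\<^sup>2) powr (q/(q-1)) = R powr (2*(q/(q-1)))"
      unfolding R2 by (rule powr_powr)
    then have "(K0 / R\<^sup>2) powr (q/(q-1)) = K0 powr (q/(q-1)) / R powr (2*(q/(q-1)))"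
      by (simp only: powr_divide)
    also have "\<dots> = K0 powr (q/(q-1)) * R powr (-2*(q/(q-1)))"
      by (simp add: powr_minus_divide divide_inverse)
    finally show ?thesis .
  qed
  have pt: "(K0 / R\<^sup>2) * (u x * hh k x * th d R x ^ (m - 1))
     \<le> L * (enorm d x powr (-\<alpha>) * u x powr q * hh k x * th d R x ^ m)
       + L powr (-1/(q-1)) * (K0 powr (q/(q-1)) * R powr (-2*(q/(q-1)))) * (hh k x * enorm d x powr (\<alpha>/(q-1)))"
    if x: "x \<in> S" for x
  proof -
    have xA: "x \<in> orthant d k" using x S by (auto simp: ballA_def)
    have rho: "enorm d x > 0" using enorm_ge1[OF xA k1 kd] by simp
    have T1: "th d R x \<le> 1"
    proof -
      have "ss d x \<ge> 0" unfolding ss_def by (intro sum_nonneg) auto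
      then show ?thesis using R by (simp add: th_def)
    qed
    have "(K0 / R\<^sup>2) * (u x * hh k x * th d R x ^ (m - 1))
      \<le> L * (enorm d x powr (-\<alpha>) * u x powr q * hh k x * th d R x ^ m)
       + L powr (-1/(q-1)) * (K0 / R\<^sup>2) powr (q/(q-1)) * hh k x * enorm d x powr (\<alpha>/(q-1))"
    proof (rule PB[OF rho hh_pos[OF xA] th_nonneg T1 L _ _ q m])
      show "0 \<le> K0 / R\<^sup>2" using K0 by simp
      show "0 \<le> u x" using upos xA by (auto intro: less_imp_le)
    qed
    then show ?thesis unfolding Cpow by (simp add: algebra_simps)
  qed
  have "(K0 / R\<^sup>2) * (\<Sum>x\<in>S. u x * hh k x * th d R x ^ (m - 1)) = (\<Sum>x\<in>S. (K0 / R\<^sup>2) * (u x * hh k x * th d R x ^ (m - 1)))"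
    by (simp add: sum_distrib_left)
  also have "\<dots> \<le> (\<Sum>x\<in>S. L * (enorm d x powr (-\<alpha>) * u x powr q * hh k x * th d R x ^ m)
       + L powr (-1/(q-1)) * (K0 powr (q/(q-1)) * R powr (-2*(q/(q-1)))) * (hh k x * enorm d x powr (\<alpha>/(q-1))))"
    by (rule sum_mono) (rule pt)
  also have "\<dots> = L * (\<Sum>x\<in>S. enorm d x powr (-\<alpha>) * u x powr q * hh k x * th d R x ^ m)
       + L powr (-1/(q-1)) * K0 powr (q/(q-1)) * R powr (-2*(q/(q-1))) * (\<Sum>x\<in>S. hh k x * enorm d x powr (\<alpha>/(q-1)))"
    by (simp add: sum.distrib sum_distrib_left mult.assoc)
  finally show ?thesis .
qed

lemma ss_nonneg: "ss d x \<ge> 0" unfolding ss_def by (intro sum_nonneg) auto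

lemma ballA_mono: "R \<le> R' \<Longrightarrow> 0 \<le> R \<Longrightarrow> ballA d k R \<subseteq> ballA d k R'"
proof
  fix x assume a: "R \<le> R'" "0 \<le> R" "x \<in> ballA d k R"
  have RR: "R\<^sup>2 \<le> R'\<^sup>2" using a by (intro power_mono) auto
  have "ss d x < R\<^sup>2" "x \<in> orthant d k" using a by (auto simp: ballA_def)
  then show "x \<in> ballA d k R'" using RR by (auto simp: ballA_def)
qed

lemma th_le1: "R > 0 \<Longrightarrow> th d R x \<le> 1"
  using ss_nonneg[of d x] by (simp add: th_def)

theorem nonexist:
  fixes d k :: nat and q \<alpha> :: real and u :: "(nat \<Rightarrow> int) \<Rightarrow> real"
  assumes d3: "d \<ge> 3" and k1: "1 \<le> k" and kd: "k \<le> d" and q: "q > 1" and \<alpha>: "\<alpha> \<ge> 0"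
    and sol: "\<forall>x\<in>orthant d k. u x > 0 \<and> - lap d u x \<ge> enorm d x powr (- \<alpha>) * u x powr q"
    and bd: "\<forall>y\<in>boundary d (orthant d k). u y = 0"
    and cond: "\<not> (\<alpha> + q * (real d + real k - 2) > real d + real k)"
  shows False
proof -
  let ?A = "orthant d k"
  have upos: "\<forall>x\<in>?A. u x > 0" using sol by auto
  define qq where "qq = q/(q-1)"
  define m :: nat where "m = nat \<lceil>qq\<rceil> + 2"
  have mq: "real m \<ge> q/(q-1)" unfolding m_def qq_def by linarith
  have m2: "m \<ge> 2" unfolding m_def by simp
  define K0 where "K0 = real m * (2 * real d + 4 * real k) / (2 * real d)"
  have K0pos: "K0 > 0" using m2 d3 by (simp add: K0_def)
  define C0 where "C0 = K0 powr qq"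
  have C0pos: "C0 > 0" using K0pos by (simp add: C0_def)
  define \<gamma> where "\<gamma> = real d + real k + \<alpha>/(q-1)"
  have "\<alpha>/(q-1) \<ge> 0" using \<alpha> q by simp
  then have \<gamma>pos: "\<gamma> > 0" using d3 by (simp add: \<gamma>_def)
  define E where "E = \<gamma> - 2 * qq"
  have E0: "E \<le> 0"
  proof -
    have qn: "q - 1 \<noteq> 0" using q by simp
    have "E * (q - 1) = (real d + real k) * (q - 1) + \<alpha> / (q - 1) * (q - 1) - 2 * (q / (q - 1) * (q - 1))"
      by (simp add: E_def \<gamma>_def qq_def algebra_simps)
    also have "\<dots> = q * (real d + real k - 2) + \<alpha> - (real d + real k)"
    proof -
      have c1: "\<alpha> / (q - 1) * (q - 1) = \<alpha>" using qn by simp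
      have c2: "q / (q - 1) * (q - 1) = q" using qn by simp
      show ?thesis unfolding c1 c2 by (simp add: algebra_simps)
    qed
    also have "\<dots> \<le> 0" using cond by linarith
    finally have "E * (q - 1) \<le> 0" .
    then show ?thesis using q by (simp add: mult_le_0_iff)
  qed
  have Rpow: "R powr (-2 * qq) * R powr \<gamma> \<le> 1" if "R \<ge> 1" for R
  proof -
    have "R powr (-2 * qq) * R powr \<gamma> = R powr E" using that by (simp add: E_def powr_add[symmetric])
    also have "\<dots> \<le> R powr 0" using that E0 by (intro powr_mono) auto
    finally show ?thesis using that by simp
  qed
  define P where "P = (\<lambda>x. enorm d x powr (- \<alpha>) * u x powr q * hh k x)"
  have P0: "P x \<ge> 0" if "x \<in> ?A" for x
    using that hh_pos[OF that] by (simp add: P_def)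
  define I where "I = (\<lambda>R. \<Sum>x\<in>ballA d k R. P x * th d R x ^ m)"
  define J where "J = (\<lambda>S R. \<Sum>x\<in>S. u x * hh k x * th d R x ^ (m - 1))"
  have star: "I R \<le> (K0 / R\<^sup>2) * J (ballA d k R) R" if "R > 0" for R
  proof -
    have "I R \<le> (m * (2 * real d + 4 * real k) / (2 * real d * R\<^sup>2)) * J (ballA d k R) R"
      unfolding I_def J_def P_def using star_ineq[OF _ kd sol bd that m2] d3 by simp
    also have "m * (2 * real d + 4 * real k) / (2 * real d * R\<^sup>2) = K0 / R\<^sup>2" by (simp add: K0_def)
    finally show ?thesis .
  qed
  have GL': "(K0 / R\<^sup>2) * J S R \<le> L * (\<Sum>x\<in>S. P x * th d R x ^ m)
       + L powr (-1/(q-1)) * C0 * R powr (-2*qq) * (\<Sum>x\<in>S. hh k x * enorm d x powr (\<alpha>/(q-1)))"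
    if "R \<ge> 1" "S \<subseteq> ballA d k R" "L > 0" for R S L
    using GL[OF upos q mq k1 kd that less_imp_le[OF K0pos], of \<alpha>]
    unfolding J_def P_def C0_def qq_def by simp
  define C2 where "C2 = 2 * ((1/2) powr (-1/(q-1)) * C0 * 5 ^ d)"
  have step1: "I R \<le> C2" if R: "R \<ge> 1" for R
  proof -
    have "I R \<le> (K0 / R\<^sup>2) * J (ballA d k R) R" using star R by simp
    also have "\<dots> \<le> (1/2) * I R + (1/2) powr (-1/(q-1)) * C0 * R powr (-2*qq) * (\<Sum>x\<in>ballA d k R. hh k x * enorm d x powr (\<alpha>/(q-1)))"
      using GL'[OF R order_refl, of "1/2"] by (simp add: I_def)
    also have "(1/2) powr (-1/(q-1)) * C0 * R powr (-2*qq) * (\<Sum>x\<in>ballA d k R. hh k x * enorm d x powr (\<alpha>/(q-1)))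
        \<le> (1/2) powr (-1/(q-1)) * C0 * R powr (-2*qq) * (5 ^ d * R powr \<gamma>)"
      using CB[OF R kd, of "\<alpha>/(q-1)"] \<alpha> q C0pos unfolding \<gamma>_def by (intro mult_left_mono) auto
    also have "\<dots> = (1/2) powr (-1/(q-1)) * C0 * 5 ^ d * (R powr (-2*qq) * R powr \<gamma>)" by simp
    also have "\<dots> \<le> (1/2) powr (-1/(q-1)) * C0 * 5 ^ d"
      using Rpow[OF R] C0pos by (intro mult_left_le) auto
    finally show ?thesis unfolding C2_def by linarith
  qed
  define C3 where "C3 = 2 ^ m * C2"
  have step2: "(\<Sum>x\<in>S. P x) \<le> C3" if S: "finite S" "S \<subseteq> ?A" for S
  proof -
    define R where "R = 2 * (1 + (\<Sum>x\<in>S. ss d x))"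
    have s0: "(\<Sum>x\<in>S. ss d x) \<ge> 0" by (intro sum_nonneg ss_nonneg)
    have R1: "R \<ge> 1" using s0 by (simp add: R_def)
    have big: "2 * ss d x \<le> R\<^sup>2" if "x \<in> S" for x
    proof -
      define \<Sigma> where "\<Sigma> = (\<Sum>x\<in>S. ss d x)"
      have a0: "ss d x \<le> \<Sigma>" unfolding \<Sigma>_def using S that by (intro member_le_sum ss_nonneg) auto
      have e: "R\<^sup>2 = 4 * (1 + \<Sigma>) * (1 + \<Sigma>)" by (simp add: R_def \<Sigma>_def power2_eq_square algebra_simps)
      have c: "4 * (1 + \<Sigma>) * 1 \<le> 4 * (1 + \<Sigma>) * (1 + \<Sigma>)"
        using s0 unfolding \<Sigma>_def by (intro mult_left_mono) auto
      have a1: "2 * ss d x \<le> 4 * (1 + \<Sigma>) * 1" using a0 s0 unfolding \<Sigma>_def by (simp add: algebra_simps)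
      show ?thesis using order_trans[OF a1 c] e by simp
    qed
    have Sball: "S \<subseteq> ballA d k R"
    proof
      fix x assume x: "x \<in> S"
      have "ss d x < R\<^sup>2" using big[OF x] R1 ss_nonneg[of d x] by (smt (verit) one_le_power)
      then show "x \<in> ballA d k R" using x S by (auto simp: ballA_def)
    qed
    have "(\<Sum>x\<in>S. P x) \<le> (\<Sum>x\<in>S. 2 ^ m * (P x * th d R x ^ m))"
    proof (rule sum_mono)
      fix x assume x: "x \<in> S"
      have "th d R x \<ge> 1/2"
      proof -
        have "ss d x / R\<^sup>2 \<le> 1/2" using big[OF x] R1 by (simp add: field_simps)
        then have "1 - ss d x / R\<^sup>2 \<ge> 1/2" by linarith
        then show ?thesis unfolding th_def by (rule order_trans[OF _ max.cobounded2])
      qed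
      then have "(1/2) ^ m \<le> th d R x ^ m" by (intro power_mono) auto
      then have "2 ^ m * th d R x ^ m \<ge> 1" by (simp add: field_simps)
      then have "P x * 1 \<le> P x * (2 ^ m * th d R x ^ m)" using P0 x S by (intro mult_left_mono) auto
      then show "P x \<le> 2 ^ m * (P x * th d R x ^ m)" by (simp add: algebra_simps)
    qed
    also have "\<dots> = 2 ^ m * (\<Sum>x\<in>S. P x * th d R x ^ m)" by (simp add: sum_distrib_left)
    also have "(\<Sum>x\<in>S. P x * th d R x ^ m) \<le> I R"
      unfolding I_def using Sball ballA_finite[of R d k] R1 P0 th_nonneg
      by (intro sum_mono2) (auto simp: ballA_def)
    then have "2 ^ m * (\<Sum>x\<in>S. P x * th d R x ^ m) \<le> 2 ^ m * C2" using step1[OF R1] by simp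
    finally show ?thesis by (simp add: C3_def)
  qed
  define x0 :: "nat \<Rightarrow> int" where "x0 = (\<lambda>i. if i < k then 1 else 0)"
  have x0A: "x0 \<in> ?A" using kd by (auto simp: x0_def orthant_def lattice_def)
  have ssx0: "ss d x0 = real k"
  proof -
    have "ss d x0 = (\<Sum>i<d. if i < k then 1 else 0)"
      unfolding ss_def by (intro sum.cong) (auto simp: x0_def)
    also have "\<dots> = real k" using sum_if_lt[OF kd, of 1 0] by simp
    finally show ?thesis .
  qed
  have Px0: "P x0 > 0"
  proof -
    have "u x0 > 0" using x0A upos by simp
    moreover have "enorm d x0 > 0" using enorm_ge1[OF x0A k1 kd] by simp
    ultimately show ?thesis using hh_pos[OF x0A] unfolding P_def by (intro mult_pos_pos) auto
  qed
  define c0 where "c0 = P x0 * (1/2) ^ m"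
  have c0pos: "c0 > 0" using Px0 by (simp add: c0_def)
  have step4: "I R \<ge> c0" if R: "R \<ge> 1" "R\<^sup>2 \<ge> 2 * real k" for R
  proof -
    have R0: "R > 0" using R by simp
    have inb: "x0 \<in> ballA d k R" using x0A ssx0 R k1 by (auto simp: ballA_def)
    have "th d R x0 \<ge> 1/2"
    proof -
      have "real k / R\<^sup>2 \<le> 1/2" using R R0 by (simp add: field_simps)
      then have "1 - ss d x0 / R\<^sup>2 \<ge> 1/2" unfolding ssx0 by linarith
      then show ?thesis unfolding th_def by (rule order_trans[OF _ max.cobounded2])
    qed
    then have "(1/2) ^ m \<le> th d R x0 ^ m" by (intro power_mono) auto
    then have "c0 \<le> P x0 * th d R x0 ^ m" unfolding c0_def using Px0 by (intro mult_left_mono) auto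
    also have "\<dots> \<le> I R" unfolding I_def
      using inb ballA_finite[OF R0, of d k] P0 th_nonneg
      by (intro member_le_sum) (auto simp: ballA_def)
    finally show ?thesis .
  qed
  have C3pos: "C3 > 0"
  proof -
    have "(\<Sum>x\<in>{x0}. P x) \<le> C3" using x0A by (intro step2) auto
    then show ?thesis using Px0 by simp
  qed
  define B0 where "B0 = C0 * 5 ^ d"
  have B0pos: "B0 > 0" using C0pos by (simp add: B0_def)
  define L1 where "L1 = c0 / (4 * C3)"
  have L1pos: "L1 > 0" using c0pos C3pos by (simp add: L1_def)
  define L2 where "L2 = (4 * B0 / c0) powr (q - 1)"
  have L2pos: "L2 > 0" using B0pos c0pos by (simp add: L2_def)
  have L2p: "L2 powr (-1/(q-1)) = c0 / (4 * B0)"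
  proof -
    have "L2 powr (-1/(q-1)) = (4 * B0 / c0) powr ((q - 1) * (-1/(q-1)))"
      unfolding L2_def by (rule powr_powr)
    also have "(q - 1) * (-1/(q-1)) = -1" using q by simp
    finally show ?thesis using B0pos c0pos by (simp add: powr_minus_divide)
  qed
  define Y where "Y = c0 / (4 * (L1 powr (-1/(q-1)) * B0))"
  have Ypos: "Y > 0" using c0pos L1pos B0pos by (simp add: Y_def)
  define \<epsilon> where "\<epsilon> = min 1 (Y powr (1/\<gamma>))"
  have eps0: "\<epsilon> > 0" using Ypos by (simp add: \<epsilon>_def)
  have eps1: "\<epsilon> \<le> 1" by (simp add: \<epsilon>_def)
  have epsg: "\<epsilon> powr \<gamma> \<le> Y"
  proof -
    have "\<epsilon> powr \<gamma> \<le> (Y powr (1/\<gamma>)) powr \<gamma>"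
      using eps0 \<gamma>pos by (intro powr_mono2) (auto simp: \<epsilon>_def)
    also have "\<dots> = Y" using \<gamma>pos Ypos by (simp add: powr_powr)
    finally show ?thesis .
  qed
  define T where "T = (\<lambda>R. \<Sum>x\<in>ballA d k R - ballA d k (\<epsilon> * R). P x)"
  have step3: "I R \<le> 3 * c0 / 4 + L2 * T R" if R: "R \<ge> 1" and eR: "\<epsilon> * R \<ge> 1" for R
  proof -
    have R0: "R > 0" using R by simp
    let ?B = "ballA d k R" and ?In = "ballA d k (\<epsilon> * R)"
    have InB: "?In \<subseteq> ?B" using eps1 eps0 R by (intro ballA_mono) (auto simp: mult_le_cancel_right1)
    have finB: "finite ?B" using ballA_finite[OF R0] .
    have OutB: "?B - ?In \<subseteq> ?B" by auto
    have Jsplit: "J ?B R = J (?B - ?In) R + J ?In R"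
      unfolding J_def using InB finB by (rule sum.subset_diff)
    have thm1: "th d R x ^ m \<le> 1" for x using th_nonneg th_le1[OF R0] by (simp add: power_le_one)
    have PA: "\<And>x. x \<in> ?B \<Longrightarrow> P x \<ge> 0" using P0 by (auto simp: ballA_def)
    have hr0: "\<And>x. x \<in> ?B \<Longrightarrow> hh k x * enorm d x powr (\<alpha>/(q-1)) \<ge> 0"
    proof -
      fix x assume "x \<in> ?B"
      then have "hh k x > 0" using hh_pos by (auto simp: ballA_def)
      then show "hh k x * enorm d x powr (\<alpha>/(q-1)) \<ge> 0" by simp
    qed
    have inner: "(K0 / R\<^sup>2) * J ?In R \<le> c0 / 4 + c0 / 4"
    proof -
      have "(K0 / R\<^sup>2) * J ?In R \<le> L1 * (\<Sum>x\<in>?In. P x * th d R x ^ m)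
          + L1 powr (-1/(q-1)) * C0 * R powr (-2*qq) * (\<Sum>x\<in>?In. hh k x * enorm d x powr (\<alpha>/(q-1)))"
        by (rule GL'[OF R InB L1pos])
      also have "(\<Sum>x\<in>?In. P x * th d R x ^ m) \<le> (\<Sum>x\<in>?In. P x)"
        using InB PA thm1 by (intro sum_mono) (auto intro: mult_left_le)
      also have "(\<Sum>x\<in>?In. P x) \<le> C3"
        using InB finB by (intro step2) (auto simp: ballA_def intro: finite_subset)
      also have "(\<Sum>x\<in>?In. hh k x * enorm d x powr (\<alpha>/(q-1))) \<le> 5 ^ d * (\<epsilon> * R) powr \<gamma>"
        using CB[OF eR kd, of "\<alpha>/(q-1)"] \<alpha> q unfolding \<gamma>_def by simp
      finally have "(K0 / R\<^sup>2) * J ?In R \<le> L1 * C3 + L1 powr (-1/(q-1)) * C0 * R powr (-2*qq) * (5 ^ d * (\<epsilon> * R) powr \<gamma>)"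
        using L1pos C0pos by (simp add: mult_left_mono)
      also have "L1 powr (-1/(q-1)) * C0 * R powr (-2*qq) * (5 ^ d * (\<epsilon> * R) powr \<gamma>)
           = L1 powr (-1/(q-1)) * B0 * \<epsilon> powr \<gamma> * (R powr (-2*qq) * R powr \<gamma>)"
        using eps0 R0 by (simp add: B0_def powr_mult)
      also have "\<dots> \<le> L1 powr (-1/(q-1)) * B0 * \<epsilon> powr \<gamma>"
        using Rpow[OF R] L1pos B0pos by (intro mult_left_le) auto
      also have "\<dots> \<le> L1 powr (-1/(q-1)) * B0 * Y"
        using epsg L1pos B0pos by (intro mult_left_mono) auto
      also have "L1 powr (-1/(q-1)) * B0 * Y = c0 / 4"
        using L1pos B0pos by (simp add: Y_def)
      also have "L1 * C3 = c0 / 4" using C3pos by (simp add: L1_def)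
      finally show ?thesis by simp
    qed
    have outer: "(K0 / R\<^sup>2) * J (?B - ?In) R \<le> L2 * T R + c0 / 4"
    proof -
      have "(K0 / R\<^sup>2) * J (?B - ?In) R \<le> L2 * (\<Sum>x\<in>?B - ?In. P x * th d R x ^ m)
          + L2 powr (-1/(q-1)) * C0 * R powr (-2*qq) * (\<Sum>x\<in>?B - ?In. hh k x * enorm d x powr (\<alpha>/(q-1)))"
        by (rule GL'[OF R OutB L2pos])
      also have "(\<Sum>x\<in>?B - ?In. P x * th d R x ^ m) \<le> T R"
        unfolding T_def using PA thm1 by (intro sum_mono) (auto intro: mult_left_le)
      also have "(\<Sum>x\<in>?B - ?In. hh k x * enorm d x powr (\<alpha>/(q-1))) \<le> (\<Sum>x\<in>?B. hh k x * enorm d x powr (\<alpha>/(q-1)))"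
        using finB hr0 by (intro sum_mono2) auto
      also have "\<dots> \<le> 5 ^ d * R powr \<gamma>"
        using CB[OF R kd, of "\<alpha>/(q-1)"] \<alpha> q unfolding \<gamma>_def by simp
      finally have "(K0 / R\<^sup>2) * J (?B - ?In) R \<le> L2 * T R + L2 powr (-1/(q-1)) * C0 * R powr (-2*qq) * (5 ^ d * R powr \<gamma>)"
        using L2pos C0pos by (simp add: mult_left_mono)
      also have "L2 powr (-1/(q-1)) * C0 * R powr (-2*qq) * (5 ^ d * R powr \<gamma>)
           = L2 powr (-1/(q-1)) * B0 * (R powr (-2*qq) * R powr \<gamma>)"
        by (simp add: B0_def)
      also have "\<dots> \<le> L2 powr (-1/(q-1)) * B0"
        using Rpow[OF R] L2pos B0pos by (intro mult_left_le) auto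
      also have "\<dots> = c0 / 4" unfolding L2p using B0pos by simp
      finally show ?thesis by simp
    qed
    have "I R \<le> (K0 / R\<^sup>2) * J ?B R" using star[OF R0] .
    also have "\<dots> = (K0 / R\<^sup>2) * J (?B - ?In) R + (K0 / R\<^sup>2) * J ?In R"
      unfolding Jsplit by (simp add: algebra_simps)
    finally show ?thesis using inner outer by simp
  qed
  define \<tau> where "\<tau> = c0 / (4 * L2)"
  have taupos: "\<tau> > 0" using c0pos L2pos by (simp add: \<tau>_def)
  define Rb where "Rb = 1 / \<epsilon> + 2 * real k"
  have "1 / \<epsilon> \<ge> 1" using eps0 eps1 by (simp add: field_simps)
  then have Rb1: "Rb \<ge> 1" by (simp add: Rb_def)
  define Rs where "Rs = (\<lambda>j::nat. Rb / \<epsilon> ^ j)"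
  have Rs_ge: "Rs j \<ge> Rb" for j
  proof -
    have "\<epsilon> ^ j \<le> 1" using eps0 eps1 by (simp add: power_le_one)
    moreover have "\<epsilon> ^ j > 0" using eps0 by simp
    ultimately show ?thesis unfolding Rs_def using Rb1
      by (simp add: le_divide_eq mult_le_cancel_left1)
  qed
  have TR: "T (Rs j) \<ge> \<tau>" for j
  proof -
    let ?R = "Rs j"
    have R1: "?R \<ge> 1" using Rs_ge[of j] Rb1 by linarith
    have "\<epsilon> * ?R \<ge> \<epsilon> * Rb" using Rs_ge[of j] eps0 by simp
    moreover have "\<epsilon> * Rb \<ge> 1" using eps0 k1 by (simp add: Rb_def algebra_simps)
    ultimately have eR: "\<epsilon> * ?R \<ge> 1" by linarith
    have "?R\<^sup>2 \<ge> ?R" using R1 by (simp add: power2_eq_square)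
    moreover have "?R \<ge> 2 * real k"
    proof -
      have "1 / \<epsilon> > 0" using eps0 by simp
      then show ?thesis using Rs_ge[of j] unfolding Rb_def by linarith
    qed
    ultimately have R2: "?R\<^sup>2 \<ge> 2 * real k" by linarith
    have "c0 \<le> 3 * c0 / 4 + L2 * T ?R" using step4[OF R1 R2] step3[OF R1 eR] by linarith
    then have "c0 / 4 \<le> L2 * T ?R" by simp
    then show ?thesis unfolding \<tau>_def using L2pos by (simp add: field_simps)
  qed
  define S where "S = (\<lambda>R. \<Sum>x\<in>ballA d k R. P x)"
  have Sgrow: "S (Rs j) \<ge> real j * \<tau>" for j
  proof (induction j)
    case 0
    have "S (Rs 0) \<ge> 0" unfolding S_def using P0 by (intro sum_nonneg) (auto simp: ballA_def)
    then show ?case by simp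
  next
    case (Suc j)
    have R0: "Rs (Suc j) > 0" using Rs_ge[of "Suc j"] Rb1 by linarith
    have eq: "\<epsilon> * Rs (Suc j) = Rs j" using eps0 by (simp add: Rs_def field_simps)
    have sub: "ballA d k (Rs j) \<subseteq> ballA d k (Rs (Suc j))"
    proof (rule ballA_mono)
      have "\<epsilon> * Rs (Suc j) \<le> 1 * Rs (Suc j)" using eps1 R0 by (intro mult_right_mono) auto
      then show "Rs j \<le> Rs (Suc j)" using eq by simp
      show "0 \<le> Rs j" using Rs_ge[of j] Rb1 by linarith
    qed
    have "S (Rs (Suc j)) = T (Rs (Suc j)) + S (Rs j)"
      unfolding S_def T_def eq using sub ballA_finite[OF R0] by (rule sum.subset_diff)
    then show ?case using Suc TR[of "Suc j"] by (simp add: algebra_simps)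
  qed
  define N where "N = nat \<lceil>C3 / \<tau>\<rceil> + 1"
  have "real N * \<tau> > C3"
  proof -
    have "real N > C3 / \<tau>" unfolding N_def by linarith
    then show ?thesis using taupos by (simp add: field_simps)
  qed
  moreover have "S (Rs N) \<le> C3"
  proof -
    have R0: "Rs N > 0" using Rs_ge[of N] Rb1 by linarith
    show ?thesis unfolding S_def using ballA_finite[OF R0] by (intro step2) (auto simp: ballA_def)
  qed
  ultimately show False using Sgrow[of N] by linarith
qed

lemma TL:
  fixes t \<delta> \<beta> lam :: real
  assumes t: "t > 0" and l0: "lam > 0" and l1: "lam \<le> 1" and td: "t + \<delta> \<ge> lam * t" and b: "\<beta> > 0"
  shows "(t + \<delta>) powr (-\<beta>) \<le> t powr (-\<beta>) - \<beta> * t powr (-\<beta>-1) * \<delta>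
           + (\<beta> * (\<beta> + 1) / 2) * lam powr (-\<beta>-2) * t powr (-\<beta>-2) * \<delta>\<^sup>2"
proof (cases "\<delta> = 0")
  case True then show ?thesis by simp
next
  case False
  define D where "D = (\<lambda>n::nat. \<lambda>s::real. if n = 0 then s powr (-\<beta>) else if n = 1 then -\<beta> * s powr (-\<beta>-1)
     else \<beta> * (\<beta> + 1) * s powr (-\<beta>-2))"
  define a where "a = min t (t + \<delta>)"
  define b' where "b' = max t (t + \<delta>)"
  have lt: "lam * t > 0" using l0 t by simp
  have a0: "a \<ge> lam * t" using td t l1 by (auto simp: a_def intro: mult_left_le_one_le)
  have der: "\<forall>(m::nat) (s::real). m < 2 \<and> a \<le> s \<and> s \<le> b' \<longrightarrow> DERIV (D m) s :> D (Suc m) s"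
  proof (intro allI impI)
    fix m :: nat and s :: real assume ms: "m < 2 \<and> a \<le> s \<and> s \<le> b'"
    then have s0: "s > 0" using a0 lt by linarith
    show "DERIV (D m) s :> D (Suc m) s"
    proof (cases "m = 0")
      case True
      have "D 0 = (\<lambda>s. s powr (-\<beta>))" by (simp add: D_def)
      moreover have "DERIV (\<lambda>s. s powr (-\<beta>)) s :> (-\<beta>) * s powr (-\<beta> - 1)"
        by (rule has_real_derivative_powr[OF s0])
      ultimately show ?thesis using True by (simp add: D_def)
    next
      case False
      then have m1: "m = 1" using ms by simp
      have "D 1 = (\<lambda>s. -\<beta> * s powr (-\<beta>-1))" by (simp add: D_def)
      moreover have "DERIV (\<lambda>s. -\<beta> * s powr (-\<beta>-1)) s :> -\<beta> * ((-\<beta>-1) * s powr (-\<beta> - 1 - 1))"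
        by (intro DERIV_cmult has_real_derivative_powr[OF s0])
      moreover have "-\<beta> * ((-\<beta>-1) * s powr (-\<beta> - 1 - 1)) = D (Suc 1) s"
        by (simp add: D_def algebra_simps)
      ultimately show ?thesis using m1 by simp
    qed
  qed
  obtain \<xi> where xi: "(if t + \<delta> < t then t + \<delta> < \<xi> \<and> \<xi> < t else t < \<xi> \<and> \<xi> < t + \<delta>)"
    and eq: "D 0 (t + \<delta>) = (\<Sum>m<2. D m t / fact m * (t + \<delta> - t) ^ m) + D 2 \<xi> / fact 2 * (t + \<delta> - t) ^ 2"
    using Taylor[of 2 D "D 0" a b' t "t + \<delta>"] der False by (auto simp: a_def b'_def)
  have xi0: "\<xi> \<ge> lam * t" using xi a0 by (auto simp: a_def split: if_splits)
  have "\<xi> powr (-\<beta>-2) \<le> (lam * t) powr (-\<beta>-2)"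
    using xi0 lt b by (intro powr_mono2') auto
  also have "\<dots> = lam powr (-\<beta>-2) * t powr (-\<beta>-2)" using l0 t by (simp add: powr_mult)
  finally have xib: "\<xi> powr (-\<beta>-2) \<le> lam powr (-\<beta>-2) * t powr (-\<beta>-2)" .
  have "(t + \<delta>) powr (-\<beta>) = t powr (-\<beta>) - \<beta> * t powr (-\<beta>-1) * \<delta> + (\<beta> * (\<beta> + 1) / 2) * \<xi> powr (-\<beta>-2) * \<delta>\<^sup>2"
    using eq by (simp add: D_def numeral_2_eq_2 lessThan_Suc algebra_simps)
  also have "(\<beta> * (\<beta> + 1) / 2) * \<xi> powr (-\<beta>-2) * \<delta>\<^sup>2 \<le> (\<beta> * (\<beta> + 1) / 2) * (lam powr (-\<beta>-2) * t powr (-\<beta>-2)) * \<delta>\<^sup>2"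
    using xib b by (intro mult_right_mono mult_left_mono) auto
  finally show ?thesis by (simp add: algebra_simps)
qed

lemma FIN:
  fixes r h t c eps c1 q \<alpha> \<beta> \<sigma> :: real and k :: nat
  assumes r: "r \<ge> 1" and h: "h > 0" and hr: "h \<le> r ^ k" and t: "t \<ge> 1" and rt: "r\<^sup>2 \<le> t"
    and tr: "t \<le> (c + 1) * r\<^sup>2" and c: "c \<ge> 0" and eps: "eps > 0" and c1: "c1 > 0" and q: "q > 1"
    and sig: "\<sigma> = real k * (q - 1) - \<alpha>"
    and epsdef: "(q - 1) * ln eps = ln c1 - (\<bar>\<sigma>\<bar> / 2) * ln (c + 1)"
    and e: "\<sigma> / 2 \<le> \<beta> * (q - 1) - 1"
  shows "r powr (-\<alpha>) * (eps * h * t powr (-\<beta>)) powr q \<le> eps * h * c1 * t powr (-\<beta>-1)"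
proof -
  have r0: "r > 0" and t0: "t > 0" using r t by auto
  define Lr where "Lr = ln r"
  define Lh where "Lh = ln h"
  define Lt where "Lt = ln t"
  define Lc where "Lc = ln (c + 1)"
  define Le where "Le = ln eps"
  define L1 where "L1 = ln c1"
  have lhs0: "r powr (-\<alpha>) * (eps * h * t powr (-\<beta>)) powr q > 0" using r0 h t0 eps by simp
  have rhs0: "eps * h * c1 * t powr (-\<beta>-1) > 0" using h t0 eps c1 by simp
  have lnL: "ln (r powr (-\<alpha>) * (eps * h * t powr (-\<beta>)) powr q) = - \<alpha> * Lr + q * (Le + Lh - \<beta> * Lt)"
    using r0 h t0 eps by (simp add: ln_mult Lr_def Le_def Lh_def Lt_def)
  have lnR: "ln (eps * h * c1 * t powr (-\<beta>-1)) = Le + Lh + L1 - (\<beta> + 1) * Lt"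
    using h t0 eps c1 by (simp add: ln_mult Le_def Lh_def L1_def Lt_def algebra_simps)
  have Lt0: "Lt \<ge> 0" using t by (simp add: Lt_def)
  have Lc0: "Lc \<ge> 0" using c by (simp add: Lc_def)
  have F1: "Lh \<le> real k * Lr"
  proof -
    have "ln h \<le> ln (r ^ k)" using h hr r0 by (subst ln_le_cancel_iff) auto
    then show ?thesis using r0 by (simp add: Lh_def Lr_def ln_realpow)
  qed
  have F1': "(q - 1) * Lh \<le> (q - 1) * (real k * Lr)" using F1 q by (intro mult_left_mono) auto
  have G1: "2 * Lr \<le> Lt"
  proof -
    have "ln (r\<^sup>2) \<le> ln t" using rt r0 t0 by (subst ln_le_cancel_iff) auto
    then show ?thesis using r0 by (simp add: Lr_def Lt_def ln_realpow)
  qed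
  have G2: "Lt \<le> Lc + 2 * Lr"
  proof -
    have "ln t \<le> ln ((c + 1) * r\<^sup>2)" using tr t0 r0 c by (subst ln_le_cancel_iff) auto
    then show ?thesis using r0 c by (simp add: Lr_def Lt_def Lc_def ln_mult ln_realpow)
  qed
  have F2: "\<sigma> * Lr \<le> (\<sigma> / 2) * Lt + (\<bar>\<sigma>\<bar> / 2) * Lc"
  proof (cases "\<sigma> \<ge> 0")
    case True
    have "\<sigma> * (2 * Lr) \<le> \<sigma> * Lt" using G1 True by (intro mult_left_mono) auto
    moreover have "(\<bar>\<sigma>\<bar> / 2) * Lc \<ge> 0" using Lc0 by simp
    ultimately show ?thesis by (simp add: algebra_simps)
  next
    case False
    have "\<sigma> * (2 * Lr) \<le> \<sigma> * (Lt - Lc)" using G2 False by (intro mult_left_mono_neg) auto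
    moreover have "\<bar>\<sigma>\<bar> = - \<sigma>" using False by simp
    ultimately show ?thesis by (simp add: algebra_simps)
  qed
  have F3: "(\<sigma> / 2) * Lt \<le> (\<beta> * (q - 1) - 1) * Lt" using e Lt0 by (intro mult_right_mono) auto
  have key: "- \<alpha> * Lr + q * (Le + Lh - \<beta> * Lt) \<le> Le + Lh + L1 - (\<beta> + 1) * Lt"
  proof -
    have X: "(Le + Lh + L1 - (\<beta> + 1) * Lt) - (- \<alpha> * Lr + q * (Le + Lh - \<beta> * Lt))
        = L1 - (q - 1) * Le - (q - 1) * Lh + \<alpha> * Lr + (\<beta> * (q - 1) - 1) * Lt"
      by (simp add: algebra_simps)
    have Y: "L1 - (q - 1) * Le = (\<bar>\<sigma>\<bar> / 2) * Lc" using epsdef by (simp add: L1_def Le_def Lc_def)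
    have Z: "(q - 1) * (real k * Lr) = \<sigma> * Lr + \<alpha> * Lr" by (simp add: sig algebra_simps)
    show ?thesis using X Y Z F1' F2 F3 by linarith
  qed
  then have "ln (r powr (-\<alpha>) * (eps * h * t powr (-\<beta>)) powr q) \<le> ln (eps * h * c1 * t powr (-\<beta>-1))"
    unfolding lnL lnR .
  then show ?thesis using lhs0 rhs0 by simp
qed

lemma ABS:
  fixes e c s a :: real
  assumes e: "e > 0" and c: "c \<ge> 4 / e\<^sup>2" and as: "a\<^sup>2 \<le> s"
  shows "2 * \<bar>a\<bar> \<le> e * (c + s)"
proof -
  have "0 \<le> e * (\<bar>a\<bar> - 1/e)\<^sup>2" using e by simp
  also have "\<dots> = e * a\<^sup>2 - 2 * \<bar>a\<bar> + 1/e" using e by (simp add: power2_eq_square field_simps)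
  finally have A: "2 * \<bar>a\<bar> \<le> e * a\<^sup>2 + 1/e" by simp
  have "e * c \<ge> e * (4 / e\<^sup>2)" using c e by (intro mult_left_mono) auto
  moreover have "e * (4 / e\<^sup>2) = 4 / e" using e by (simp add: power2_eq_square)
  moreover have "4 / e \<ge> 1 / e" using e by (simp add: divide_right_mono)
  ultimately have B: "e * c \<ge> 1 / e" by linarith
  have C: "e * s \<ge> e * a\<^sup>2" using as e by (intro mult_left_mono) auto
  show ?thesis using A B C by (simp add: algebra_simps)
qed

lemma EST:
  fixes d k :: nat and c \<beta> lam \<epsilon>0 :: real and x :: "nat \<Rightarrow> int"
  assumes x: "x \<in> orthant d k" and kd: "k \<le> d" and d: "d > 0" and b: "\<beta> > 0"
    and l0: "lam > 0" and l1: "lam < 1" and c: "c \<ge> 4 / (1 - lam)\<^sup>2" and c2: "2 * real d + 8 * real k \<le> 8 * c"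
    and e0: "\<epsilon>0 > 0"
  shows "lap d (\<lambda>y. \<epsilon>0 * hh k y * (c + ss d y) powr (-\<beta>)) x
     \<le> - (\<epsilon>0 / (2 * real d)) * hh k x * \<beta> * ((2 * real d + 4 * real k) - 4 * (\<beta> + 1) * lam powr (-\<beta>-2))
         * (c + ss d x) powr (-\<beta>-1)"
proof -
  define t where "t = c + ss d x"
  define g where "g = (\<lambda>s::real. s powr (-\<beta>))"
  define B where "B = \<beta> * t powr (-\<beta>-1)"
  define Q where "Q = (\<beta> * (\<beta> + 1) / 2) * lam powr (-\<beta>-2) * t powr (-\<beta>-2)"
  define h where "h = hh k x"
  let ?hp = "\<lambda>i. hh k (sh x i 1)" and ?hm = "\<lambda>i. hh k (sh x i (-1))"
  let ?dp = "\<lambda>i. 2 * real_of_int (x i) + 1" and ?dm = "\<lambda>i. 1 - 2 * real_of_int (x i)"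
  have cpos: "c > 0"
  proof -
    have "(1 - lam)\<^sup>2 > 0" using l1 by simp
    then have "4 / (1 - lam)\<^sup>2 > 0" by simp
    then show ?thesis using c by linarith
  qed
  have t0: "t > 0" using cpos ss_nonneg[of d x] by (simp add: t_def)
  have lat: "x \<in> lattice d" using x by (rule orth_lattice)
  have hp0: "\<And>i. i < d \<Longrightarrow> ?hp i \<ge> 0" using hh_nb_nonneg[OF x] by auto
  have hm0: "\<And>i. i < d \<Longrightarrow> ?hm i \<ge> 0" using hh_nb_nonneg[OF x] by auto
  have np: "c + ss d (sh x i 1) = t + ?dp i" if "i < d" for i
    using that by (simp add: t_def ss_sh algebra_simps)
  have nm: "c + ss d (sh x i (-1)) = t + ?dm i" if "i < d" for i
    using that by (simp add: t_def ss_sh algebra_simps)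
  have big: "t + ?dp i \<ge> lam * t \<and> t + ?dm i \<ge> lam * t" if "i < d" for i
  proof -
    have "2 * \<bar>real_of_int (x i)\<bar> \<le> (1 - lam) * (c + ss d x)"
      using ABS[of "1 - lam" c "real_of_int (x i)" "ss d x"] l1 c sq_le_ss[OF that, of x] by simp
    then have "2 * \<bar>real_of_int (x i)\<bar> \<le> t - lam * t" by (simp add: t_def algebra_simps)
    then have "\<bar>2 * real_of_int (x i)\<bar> \<le> t - lam * t" by (simp add: abs_mult)
    then have "2 * real_of_int (x i) \<le> t - lam * t" "- (2 * real_of_int (x i)) \<le> t - lam * t"
      by (auto simp only: abs_le_iff)
    then show ?thesis by linarith
  qed
  have TLp: "g (t + ?dp i) \<le> g t - B * ?dp i + Q * (?dp i)\<^sup>2" if "i < d" for i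
    using TL[OF t0 l0 less_imp_le[OF l1] _ b, of "?dp i"] big[OF that] by (simp add: g_def B_def Q_def algebra_simps)
  have TLm: "g (t + ?dm i) \<le> g t - B * ?dm i + Q * (?dm i)\<^sup>2" if "i < d" for i
    using TL[OF t0 l0 less_imp_le[OF l1] _ b, of "?dm i"] big[OF that] by (simp add: g_def B_def Q_def algebra_simps)
  have S: "(\<Sum>i<d. ?hp i * g (t + ?dp i) + ?hm i * g (t + ?dm i))
       \<le> (\<Sum>i<d. ?hp i * (g t - B * ?dp i + Q * (?dp i)\<^sup>2) + ?hm i * (g t - B * ?dm i + Q * (?dm i)\<^sup>2))"
    using TLp TLm hp0 hm0 by (intro sum_mono add_mono mult_left_mono) auto
  have S2: "(\<Sum>i<d. ?hp i * (g t - B * ?dp i + Q * (?dp i)\<^sup>2) + ?hm i * (g t - B * ?dm i + Q * (?dm i)\<^sup>2))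
      = g t * (\<Sum>i<d. ?hp i + ?hm i) - B * (\<Sum>i<d. ?hp i * ?dp i + ?hm i * ?dm i)
        + Q * (\<Sum>i<d. ?hp i * (?dp i)\<^sup>2 + ?hm i * (?dm i)\<^sup>2)"
    by (simp add: sum.distrib sum_subtractf sum_distrib_left algebra_simps)
  have S3: "\<dots> = g t * (2 * real d * h) - B * ((2 * real d + 4 * real k) * h) + Q * (h * (8 * ss d x + 2 * real d + 8 * real k))"
    unfolding H0 H1[OF kd] H2[OF kd] h_def ..
  have Q0: "Q \<ge> 0" using b l0 t0 by (simp add: Q_def)
  have h0: "h > 0" using hh_pos[OF x] by (simp add: h_def)
  have S4: "Q * (h * (8 * ss d x + 2 * real d + 8 * real k)) \<le> Q * (h * (8 * t))"
    using Q0 h0 c2 by (intro mult_left_mono) (auto simp: t_def)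
  have Qt: "Q * (h * (8 * t)) = 4 * \<beta> * (\<beta> + 1) * lam powr (-\<beta>-2) * h * t powr (-\<beta>-1)"
  proof -
    have "t powr (-\<beta>-2) * t = t powr (-\<beta>-1)"
    proof -
      have "t powr (-\<beta>-2) * t = t powr (-\<beta>-2) * t powr 1" by (simp only: powr_one[OF less_imp_le[OF t0]])
      also have "\<dots> = t powr (-\<beta>-2 + 1)" by (rule powr_add[symmetric])
      also have "-\<beta>-2 + 1 = -\<beta>-1" by simp
      finally show ?thesis .
    qed
    moreover have "Q * (h * (8 * t)) = 4 * \<beta> * (\<beta> + 1) * lam powr (-\<beta>-2) * h * (t powr (-\<beta>-2) * t)"
      unfolding Q_def by (simp add: algebra_simps)
    ultimately show ?thesis by simp
  qed
  have sumv: "(\<Sum>i<d. (\<epsilon>0 * hh k (sh x i 1) * (c + ss d (sh x i 1)) powr (-\<beta>))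
         + (\<epsilon>0 * hh k (sh x i (-1)) * (c + ss d (sh x i (-1))) powr (-\<beta>))
         - 2 * (\<epsilon>0 * hh k x * (c + ss d x) powr (-\<beta>)))
      = \<epsilon>0 * ((\<Sum>i<d. ?hp i * g (t + ?dp i) + ?hm i * g (t + ?dm i)) - 2 * real d * h * g t)"
  proof -
    have "(\<Sum>i<d. (\<epsilon>0 * hh k (sh x i 1) * (c + ss d (sh x i 1)) powr (-\<beta>))
         + (\<epsilon>0 * hh k (sh x i (-1)) * (c + ss d (sh x i (-1))) powr (-\<beta>))
         - 2 * (\<epsilon>0 * hh k x * (c + ss d x) powr (-\<beta>)))
       = (\<Sum>i<d. \<epsilon>0 * (?hp i * g (t + ?dp i) + ?hm i * g (t + ?dm i)) - \<epsilon>0 * (2 * h * g t))"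
      by (intro sum.cong refl) (simp add: np nm g_def h_def t_def algebra_simps)
    also have "\<dots> = \<epsilon>0 * ((\<Sum>i<d. ?hp i * g (t + ?dp i) + ?hm i * g (t + ?dm i)) - 2 * real d * h * g t)"
      by (simp add: sum_subtractf sum_distrib_left algebra_simps)
    finally show ?thesis .
  qed
  have "lap d (\<lambda>y. \<epsilon>0 * hh k y * (c + ss d y) powr (-\<beta>)) x
      = (1 / (2 * real d)) * (\<epsilon>0 * ((\<Sum>i<d. ?hp i * g (t + ?dp i) + ?hm i * g (t + ?dm i)) - 2 * real d * h * g t))"
    unfolding lap_eq[OF lat] sumv ..
  also have "\<dots> \<le> (1 / (2 * real d)) * (\<epsilon>0 * (- B * ((2 * real d + 4 * real k) * h) + 4 * \<beta> * (\<beta> + 1) * lam powr (-\<beta>-2) * h * t powr (-\<beta>-1)))"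
  proof -
    have "(\<Sum>i<d. ?hp i * g (t + ?dp i) + ?hm i * g (t + ?dm i)) - 2 * real d * h * g t
        \<le> - B * ((2 * real d + 4 * real k) * h) + 4 * \<beta> * (\<beta> + 1) * lam powr (-\<beta>-2) * h * t powr (-\<beta>-1)"
      using S S2 S3 S4 Qt by (simp add: algebra_simps)
    then show ?thesis using e0 d by (intro mult_left_mono) auto
  qed
  also have "\<dots> = - (\<epsilon>0 / (2 * real d)) * hh k x * \<beta> * ((2 * real d + 4 * real k) - 4 * (\<beta> + 1) * lam powr (-\<beta>-2))
         * (c + ss d x) powr (-\<beta>-1)"
    using d by (simp add: B_def h_def t_def field_simps)
  finally show ?thesis .
qed

lemma enorm_sq: "(enorm d x)\<^sup>2 = ss d x"
  unfolding enorm_def ss_def[symmetric] using ss_nonneg[of d x] by simp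

lemma hh_le_enorm:
  assumes x: "x \<in> orthant d k" and kd: "k \<le> d"
  shows "hh k x \<le> enorm d x ^ k"
proof -
  have "hh k x = (\<Prod>i<k. real_of_int (x i))" by (simp add: hh_def)
  also have "\<dots> \<le> (\<Prod>i<k. enorm d x)"
  proof (rule prod_mono)
    fix i assume i: "i \<in> {..<k}"
    have xi: "x i \<ge> 1" using x i by (auto simp: orthant_def)
    have "(real_of_int (x i))\<^sup>2 \<le> ss d x" using i kd by (intro sq_le_ss) auto
    then have "real_of_int (x i) \<le> sqrt (ss d x)" by (rule real_le_rsqrt)
    then show "0 \<le> real_of_int (x i) \<and> real_of_int (x i) \<le> enorm d x"
      using xi by (simp add: enorm_def ss_def)
  qed
  finally show ?thesis by simp
qed

lemma boundary_hh:
  assumes y: "y \<in> boundary d (orthant d k)"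
  shows "hh k y = 0"
proof -
  obtain x where x: "x \<in> orthant d k" and yl: "y \<in> lattice d" and yA: "y \<notin> orthant d k"
    and l: "l1dist d x y = 1" using y by (auto simp: boundary_def)
  have "y \<in> {y\<in>lattice d. l1dist d x y = 1}" using yl l by simp
  then obtain i c where ic: "i < d" "c \<in> {1,-1}" "y = sh x i c"
    unfolding nbr_set[OF orth_lattice[OF x]] by auto
  show ?thesis using sh_out(1)[OF x ic(1) _ ic(2)] yA ic(3) by simp
qed

theorem exist:
  fixes d k :: nat and q \<alpha> :: real
  assumes d3: "d \<ge> 3" and k1: "1 \<le> k" and kd: "k \<le> d" and q: "q > 1" and \<alpha>: "\<alpha> \<ge> 0"
    and cond: "\<alpha> + q * (real d + real k - 2) > real d + real k"
  shows "\<exists>u :: (nat \<Rightarrow> int) \<Rightarrow> real.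
            (\<forall>x\<in>orthant d k. u x > 0 \<and>
               - lap d u x \<ge> enorm d x powr (- \<alpha>) * u x powr q) \<and>
            (\<forall>y\<in>boundary d (orthant d k). u y = 0)"
proof -
  define \<sigma> where "\<sigma> = real k * (q - 1) - \<alpha>"
  define bhi where "bhi = real d / 2 + real k - 1"
  define blo where "blo = max 0 ((2 + \<sigma>) / (2 * (q - 1)))"
  define \<beta> where "\<beta> = (blo + bhi) / 2"
  have bhi0: "bhi > 0" using d3 k1 by (simp add: bhi_def)
  have blo0: "blo \<ge> 0" by (simp add: blo_def)
  have blohi: "blo < bhi"
  proof -
    have "(2 + \<sigma>) < bhi * (2 * (q - 1))"
    proof -
      have "bhi * (2 * (q - 1)) = (real d + 2 * real k - 2) * (q - 1)" by (simp add: bhi_def algebra_simps)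
      then show ?thesis using cond by (simp add: \<sigma>_def algebra_simps)
    qed
    then have "(2 + \<sigma>) / (2 * (q - 1)) < bhi" using q by (simp add: divide_less_eq)
    then show ?thesis using bhi0 by (simp add: blo_def)
  qed
  have b0: "\<beta> > 0" using blo0 bhi0 by (simp add: \<beta>_def)
  have bhi_gt: "\<beta> < bhi" using blohi by (simp add: \<beta>_def)
  have blo_le: "(2 + \<sigma>) / (2 * (q - 1)) \<le> \<beta>"
  proof -
    have "(2 + \<sigma>) / (2 * (q - 1)) \<le> blo" unfolding blo_def by (rule max.cobounded2)
    then show ?thesis using blohi unfolding \<beta>_def add_divide_distrib by linarith
  qed
  have econd: "\<sigma> / 2 \<le> \<beta> * (q - 1) - 1"
  proof -
    have "2 + \<sigma> \<le> \<beta> * (2 * (q - 1))" using blo_le q by (simp add: divide_le_eq)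
    then show ?thesis by (simp add: algebra_simps)
  qed
  define \<rho> where "\<rho> = (real d / 2 + real k) / (\<beta> + 1)"
  have rho1: "\<rho> > 1" using bhi_gt b0 by (simp add: \<rho>_def bhi_def field_simps)
  define \<Lambda> where "\<Lambda> = (1 + \<rho>) / 2"
  have Lam1: "\<Lambda> > 1" using rho1 by (simp add: \<Lambda>_def)
  define lam where "lam = \<Lambda> powr (-1 / (\<beta> + 2))"
  have lam0: "lam > 0" using Lam1 by (simp add: lam_def)
  have lam1: "lam < 1" unfolding lam_def using Lam1 b0 by (intro powr_less_one) (auto simp: divide_neg_pos)
  have lampow: "lam powr (-\<beta>-2) = \<Lambda>"
  proof -
    have "lam powr (-\<beta>-2) = \<Lambda> powr ((-1 / (\<beta> + 2)) * (-\<beta>-2))" unfolding lam_def by (rule powr_powr)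
    also have "(-1 / (\<beta> + 2)) * (-\<beta>-2) = 1" using b0 by (simp add: field_simps)
    finally show ?thesis using Lam1 by simp
  qed
  define D where "D = (2 * real d + 4 * real k) - 4 * (\<beta> + 1) * lam powr (-\<beta>-2)"
  have Deq: "D = 2 * (bhi - \<beta>)"
  proof -
    have "4 * (\<beta> + 1) * \<Lambda> = 2 * (\<beta> + 1) + 2 * (real d / 2 + real k)"
      using b0 by (simp add: \<Lambda>_def \<rho>_def field_simps)
    then show ?thesis unfolding D_def lampow by (simp add: bhi_def algebra_simps)
  qed
  have D0: "D > 0" using Deq bhi_gt by simp
  define A0 where "A0 = 4 / (1 - lam)\<^sup>2"
  have A00: "A0 \<ge> 0" by (simp add: A0_def)
  define c where "c = A0 + (real d + 4 * real k) / 4 + 1"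
  have cA: "c \<ge> 4 / (1 - lam)\<^sup>2" using d3 by (simp add: c_def A0_def[symmetric])
  have ceq: "8 * c = 8 * A0 + 2 * real d + 8 * real k + 8" by (simp add: c_def algebra_simps)
  have cB: "2 * real d + 8 * real k \<le> 8 * c" unfolding ceq using A00 by linarith
  have c1': "c \<ge> 1" using A00 by (simp add: c_def)
  define c1 where "c1 = \<beta> * D / (2 * real d)"
  have c1pos: "c1 > 0" using b0 D0 d3 by (simp add: c1_def)
  define e0 where "e0 = exp ((ln c1 - (\<bar>\<sigma>\<bar> / 2) * ln (c + 1)) / (q - 1))"
  have e0pos: "e0 > 0" by (simp add: e0_def)
  have e0ln: "(q - 1) * ln e0 = ln c1 - (\<bar>\<sigma>\<bar> / 2) * ln (c + 1)" using q by (simp add: e0_def)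
  define u where "u = (\<lambda>y. e0 * hh k y * (c + ss d y) powr (-\<beta>))"
  have sol: "u x > 0 \<and> - lap d u x \<ge> enorm d x powr (- \<alpha>) * u x powr q" if x: "x \<in> orthant d k" for x
  proof -
    define t where "t = c + ss d x"
    have t1: "t \<ge> 1" using c1' ss_nonneg[of d x] by (simp add: t_def)
    have h0: "hh k x > 0" using hh_pos[OF x] .
    have "(c + ss d x) powr (-\<beta>) > 0" using t1 by (simp add: t_def)
    then have ux: "u x > 0" using e0pos h0 by (simp add: u_def)
    have lapb: "lap d u x \<le> - (e0 / (2 * real d)) * hh k x * \<beta> * D * t powr (-\<beta>-1)"
      using EST[OF x kd _ b0 lam0 lam1 cA cB e0pos] d3 unfolding u_def D_def t_def by simp
    have "- lap d u x \<ge> e0 * hh k x * c1 * t powr (-\<beta>-1)"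
    proof -
      have "e0 * hh k x * c1 * t powr (-\<beta>-1) = (e0 / (2 * real d)) * hh k x * \<beta> * D * t powr (-\<beta>-1)"
        using d3 by (simp add: c1_def field_simps)
      then show ?thesis using lapb by linarith
    qed
    moreover have "enorm d x powr (- \<alpha>) * u x powr q \<le> e0 * hh k x * c1 * t powr (-\<beta>-1)"
    proof -
      have r1: "enorm d x \<ge> 1" using enorm_ge1[OF x k1 kd] .
      have ss1: "ss d x \<ge> 1" using r1 enorm_sq[of d x] by (metis one_le_power)
      have rt: "(enorm d x)\<^sup>2 \<le> t" using enorm_sq[of d x] c1' by (simp add: t_def)
      have tr: "t \<le> (c + 1) * (enorm d x)\<^sup>2"
      proof -
        have "c \<le> c * ss d x" using ss1 c1' by (simp add: mult_le_cancel_left1)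
        then show ?thesis unfolding enorm_sq t_def by (simp add: algebra_simps)
      qed
      have "enorm d x powr (- \<alpha>) * (e0 * hh k x * t powr (-\<beta>)) powr q \<le> e0 * hh k x * c1 * t powr (-\<beta>-1)"
        by (rule FIN[OF r1 h0 hh_le_enorm[OF x kd] t1 rt tr _ e0pos c1pos q \<sigma>_def e0ln econd])
          (use c1' in simp)
      then show ?thesis by (simp add: u_def t_def)
    qed
    ultimately show ?thesis using ux by linarith
  qed
  have bd: "u y = 0" if "y \<in> boundary d (orthant d k)" for y
    using boundary_hh[OF that] by (simp add: u_def)
  show ?thesis using sol bd by blast
qed

theorem corollary8p6:
  fixes d k :: nat and q \<alpha> :: real
  assumes "d \<ge> 3" and "1 \<le> k" and "k \<le> d" and "q > 1" and "\<alpha> \<ge> 0"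
  shows "(\<exists>u :: (nat \<Rightarrow> int) \<Rightarrow> real.
            (\<forall>x\<in>orthant d k. u x > 0 \<and>
               - lap d u x \<ge> enorm d x powr (- \<alpha>) * u x powr q) \<and>
            (\<forall>y\<in>boundary d (orthant d k). u y = 0))
         \<longleftrightarrow> \<alpha> + q * (real d + real k - 2) > real d + real k"
proof
  assume "\<exists>u :: (nat \<Rightarrow> int) \<Rightarrow> real.
            (\<forall>x\<in>orthant d k. u x > 0 \<and>
               - lap d u x \<ge> enorm d x powr (- \<alpha>) * u x powr q) \<and>
            (\<forall>y\<in>boundary d (orthant d k). u y = 0)"
  then obtain u :: "(nat \<Rightarrow> int) \<Rightarrow> real" where
    sol: "\<forall>x\<in>orthant d k. u x > 0 \<and> - lap d u x \<ge> enorm d x powr (- \<alpha>) * u x powr q"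
    and bd: "\<forall>y\<in>boundary d (orthant d k). u y = 0" by blast
  show "\<alpha> + q * (real d + real k - 2) > real d + real k"
  proof (rule ccontr)
    assume "\<not> (\<alpha> + q * (real d + real k - 2) > real d + real k)"
    from nonexist[OF assms sol bd this] show False .
  qed
next
  assume "\<alpha> + q * (real d + real k - 2) > real d + real k"
  from exist[OF assms this] show "\<exists>u :: (nat \<Rightarrow> int) \<Rightarrow> real.
            (\<forall>x\<in>orthant d k. u x > 0 \<and>
               - lap d u x \<ge> enorm d x powr (- \<alpha>) * u x powr q) \<and>
            (\<forall>y\<in>boundary d (orthant d k). u y = 0)" .
qed

end
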